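(* Let $r\in\{1,\infty\}$ and $N\in\{0,2,3,\ldots\}$. Every separable metric space of diameter no greater than $r$ admits an isometric embedding into the metric space $\mathbb{G}_r(N)$ (with metric $(x,y)\mapsto p(x-y)$, $p$ its value).
   Context: All groups are Abelian. A value on $G$ is $p\colon G\to[0,\infty)$ with $p(x)=0\iff x=0$, $p(-x)=p(x)$, $p(x+y)\leqslant p(x)+p(y)$. Class $\mathcal{O}_0$: $\lim_n p(na)/n=0$ for all $a$. $\mathfrak{G}_r(N)$: separable valued Abelian groups of class $\mathcal{O}_0$ with $p\leqslant r$ (vacuous if $r=\infty$) and of exponent $N$ if $N\neq0$. $\mathbb{G}_r(N)$ is the valued Abelian group, unique up to isometric group isomorphism, which (G1) is complete and in $\mathfrak{G}_r(N)$; (G2) for every finite valued Abelian group $(H,+,q)$ (of exponent $N$ if $N\neq0$) with $q\leqslant r$, subgroup $K$, isometric homomorphism $\varphi\colon K\to\mathbb{G}_r(N)$ and $\varepsilon\in(0,1)$, there is a homomorphism $\varphi_\varepsilon\colon H\to\mathbb{G}_r(N)$ with $p(\varphi(x)-\varphi_\varepsilon(x))\leqslant\varepsilon$ on $K$ and $(1-\varepsilon)q\leqslant p\circ\varphi_\varepsilon\leqslant(1+\varepsilon)q$ on $H$; (G3) if $N=0$, finite-order elements are dense. *)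

theory Defs
  imports "HOL-Analysis.Analysis" "HOL-Algebra.Algebra"
begin

definition natmul :: "nat \<Rightarrow> 'g::ab_group_add \<Rightarrow> 'g" where
  "natmul n x = (\<Sum>i<n. x)"

definition is_value :: "('g::ab_group_add \<Rightarrow> real) \<Rightarrow> bool" where
  "is_value p \<longleftrightarrow> (\<forall>x. p x \<ge> 0) \<and> (\<forall>x. p x = 0 \<longleftrightarrow> x = 0) \<and>
     (\<forall>x. p (- x) = p x) \<and> (\<forall>x y. p (x + y) \<le> p x + p y)"

definition is_value_on :: "('h, 'm) monoid_scheme \<Rightarrow> ('h \<Rightarrow> real) \<Rightarrow> bool" where
  "is_value_on H q \<longleftrightarrow> (\<forall>x\<in>carrier H. q x \<ge> 0) \<and>
     (\<forall>x\<in>carrier H. q x = 0 \<longleftrightarrow> x = \<one>\<^bsub>H\<^esub>) \<and>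
     (\<forall>x\<in>carrier H. q (inv\<^bsub>H\<^esub> x) = q x) \<and>
     (\<forall>x\<in>carrier H. \<forall>y\<in>carrier H. q (x \<otimes>\<^bsub>H\<^esub> y) \<le> q x + q y)"

definition value_dist :: "('g::ab_group_add \<Rightarrow> real) \<Rightarrow> 'g \<Rightarrow> 'g \<Rightarrow> real" where
  "value_dist p x y = p (x - y)"

definition class_O0 :: "('g::ab_group_add \<Rightarrow> real) \<Rightarrow> bool" where
  "class_O0 p \<longleftrightarrow> (\<forall>a. (\<lambda>n. p (natmul n a) / real n) \<longlonglongrightarrow> 0)"

text \<open>Membership in the class G_r(N) (r = \<infinity> makes the bound vacuous;
  exponent N means N x = 0 for all x, imposed only when N \<noteq> 0).\<close>
definition in_frakG :: "ereal \<Rightarrow> nat \<Rightarrow> ('g::ab_group_add \<Rightarrow> real) \<Rightarrow> bool" where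
  "in_frakG r N p \<longleftrightarrow> is_value p \<and>
     separable_space (Metric_space.mtopology UNIV (value_dist p)) \<and>
     class_O0 p \<and> (\<forall>x. ereal (p x) \<le> r) \<and>
     (N \<noteq> 0 \<longrightarrow> (\<forall>x::'g. natmul N x = 0))"

text \<open>Property (G2). Finite valued Abelian groups H are represented as HOL-Algebra
  commutative groups with carrier a finite set of naturals (every finite group is
  isomorphic to such a one).\<close>
definition G2_property :: "ereal \<Rightarrow> nat \<Rightarrow> ('g::ab_group_add \<Rightarrow> real) \<Rightarrow> bool" where
  "G2_property r N p \<longleftrightarrow>
    (\<forall>(H :: nat monoid) q K \<phi> \<epsilon>.
       comm_group H \<and> finite (carrier H) \<and>
       (N \<noteq> 0 \<longrightarrow> (\<forall>x\<in>carrier H. x [^]\<^bsub>H\<^esub> N = \<one>\<^bsub>H\<^esub>)) \<and>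
       is_value_on H q \<and> (\<forall>x\<in>carrier H. ereal (q x) \<le> r) \<and>
       subgroup K H \<and>
       (\<forall>x\<in>K. \<forall>y\<in>K. \<phi> (x \<otimes>\<^bsub>H\<^esub> y) = \<phi> x + \<phi> y) \<and>
       (\<forall>x\<in>K. p (\<phi> x) = q x) \<and>
       0 < \<epsilon> \<and> \<epsilon> < 1
     \<longrightarrow> (\<exists>\<psi> :: nat \<Rightarrow> 'g.
            (\<forall>x\<in>carrier H. \<forall>y\<in>carrier H. \<psi> (x \<otimes>\<^bsub>H\<^esub> y) = \<psi> x + \<psi> y) \<and>
            (\<forall>x\<in>K. p (\<phi> x - \<psi> x) \<le> \<epsilon>) \<and>
            (\<forall>x\<in>carrier H. (1 - \<epsilon>) * q x \<le> p (\<psi> x) \<and> p (\<psi> x) \<le> (1 + \<epsilon>) * q x)))"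

definition is_bbG :: "ereal \<Rightarrow> nat \<Rightarrow> ('g::ab_group_add \<Rightarrow> real) \<Rightarrow> bool" where
  "is_bbG r N p \<longleftrightarrow>
     in_frakG r N p \<and> Metric_space.mcomplete UNIV (value_dist p) \<and>
     G2_property r N p \<and>
     (N = 0 \<longrightarrow> Metric_space.mtopology UNIV (value_dist p) closure_of
                  {x. \<exists>n>0. natmul n x = 0} = UNIV)"

end

theory Submission
  imports Defs
begin


definition ZP :: "nat \<Rightarrow> nat \<Rightarrow> (nat \<Rightarrow> int) monoid" where
  "ZP m n = \<lparr>carrier = {c. (\<forall>a. 0 \<le> c a \<and> c a < int m) \<and> (\<forall>a>n. c a = 0)},
             mult = (\<lambda>c c' a. (c a + c' a) mod int m), one = (\<lambda>a. 0)\<rparr>"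

lemma ZP_simps [simp]:
  "carrier (ZP m n) = {c. (\<forall>a. 0 \<le> c a \<and> c a < int m) \<and> (\<forall>a>n. c a = 0)}"
  "c \<otimes>\<^bsub>ZP m n\<^esub> c' = (\<lambda>a. (c a + c' a) mod int m)"
  "\<one>\<^bsub>ZP m n\<^esub> = (\<lambda>a. 0)"
  by (simp_all add: ZP_def)

lemma ZP_comm_group:
  assumes "m \<ge> 1" shows "comm_group (ZP m n)"
proof (rule comm_groupI)
  fix x y assume "x \<in> carrier (ZP m n)" "y \<in> carrier (ZP m n)"
  then show "x \<otimes>\<^bsub>ZP m n\<^esub> y \<in> carrier (ZP m n)" using assms by simp
next
  show "\<one>\<^bsub>ZP m n\<^esub> \<in> carrier (ZP m n)" using assms by auto
next
  fix x y z assume "x \<in> carrier (ZP m n)" "y \<in> carrier (ZP m n)" "z \<in> carrier (ZP m n)"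
  then show "x \<otimes>\<^bsub>ZP m n\<^esub> y \<otimes>\<^bsub>ZP m n\<^esub> z = x \<otimes>\<^bsub>ZP m n\<^esub> (y \<otimes>\<^bsub>ZP m n\<^esub> z)"
    by (simp add: mod_add_left_eq mod_add_right_eq add.assoc)
next
  fix x y assume "x \<in> carrier (ZP m n)" "y \<in> carrier (ZP m n)"
  then show "x \<otimes>\<^bsub>ZP m n\<^esub> y = y \<otimes>\<^bsub>ZP m n\<^esub> x" by (auto simp: add.commute)
next
  fix x assume "x \<in> carrier (ZP m n)"
  then show "\<one>\<^bsub>ZP m n\<^esub> \<otimes>\<^bsub>ZP m n\<^esub> x = x" by auto
next
  fix x assume x: "x \<in> carrier (ZP m n)"
  show "\<exists>y\<in>carrier (ZP m n). y \<otimes>\<^bsub>ZP m n\<^esub> x = \<one>\<^bsub>ZP m n\<^esub>"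
  proof (rule bexI[of _ "\<lambda>a. (- x a) mod int m"])
    show "(\<lambda>a. (- x a) mod int m) \<otimes>\<^bsub>ZP m n\<^esub> x = \<one>\<^bsub>ZP m n\<^esub>"
      by (simp add: mod_add_left_eq)
    show "(\<lambda>a. (- x a) mod int m) \<in> carrier (ZP m n)" using x assms by auto
  qed
qed

lemma ZP_inv:
  assumes "m \<ge> 1" "x \<in> carrier (ZP m n)"
  shows "inv\<^bsub>ZP m n\<^esub> x = (\<lambda>a. (- x a) mod int m)"
proof -
  interpret comm_group "ZP m n" by (rule ZP_comm_group[OF assms(1)])
  show ?thesis
    by (rule inv_equality) (use assms in \<open>simp_all add: mod_add_left_eq\<close>)
qed

lemma ZP_pow:
  assumes "m \<ge> 1" "x \<in> carrier (ZP m n)"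
  shows "x [^]\<^bsub>ZP m n\<^esub> k = (\<lambda>a. (int k * x a) mod int m)"
proof (induction k)
  case 0 then show ?case by simp
next
  case (Suc k)
  interpret comm_group "ZP m n" by (rule ZP_comm_group[OF assms(1)])
  have "x [^]\<^bsub>ZP m n\<^esub> Suc k = x [^]\<^bsub>ZP m n\<^esub> k \<otimes>\<^bsub>ZP m n\<^esub> x" by simp
  also have "\<dots> = (\<lambda>a. (int (Suc k) * x a) mod int m)"
    unfolding Suc by (simp add: mod_add_left_eq mod_add_right_eq distrib_right add.commute)
  finally show ?case .
qed

lemma ZP_exp:
  assumes "m \<ge> 1" "x \<in> carrier (ZP m n)"
  shows "x [^]\<^bsub>ZP m n\<^esub> m = \<one>\<^bsub>ZP m n\<^esub>"
  using ZP_pow[OF assms] by simp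

lemma ZP_finite: "finite (carrier (ZP m n))"
proof -
  have "carrier (ZP m n) \<subseteq> {c. (\<forall>a. (a \<in> {..n} \<longrightarrow> c a \<in> {0..<int m}) \<and> (a \<notin> {..n} \<longrightarrow> c a = 0))}"
    by auto
  moreover have "finite {c. (\<forall>a. (a \<in> {..n} \<longrightarrow> c a \<in> {0..<int m}) \<and> (a \<notin> {..n} \<longrightarrow> c a = (0::int)))}"
    by (rule finite_set_of_finite_funs) auto
  ultimately show ?thesis by (rule finite_subset)
qed

lemma ZP_mono: "n \<le> n' \<Longrightarrow> carrier (ZP m n) \<subseteq> carrier (ZP m n')"
  by auto



definition Ji :: "real \<Rightarrow> real \<Rightarrow> int" where
  "Ji t x = (if x < t then 1 else 0) - (if x < 0 then 1 else 0)"
definition suppi :: "(nat \<Rightarrow> int) \<Rightarrow> nat set" where "suppi c = {a. c a \<noteq> 0}"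
definition Tset :: "nat \<Rightarrow> (nat \<Rightarrow> real) \<Rightarrow> (nat \<Rightarrow> int) \<Rightarrow> real set" where
  "Tset m w c = {x. (\<Sum>a\<in>suppi c. c a * Ji (w a) x) mod int m \<noteq> 0}"
definition lenT :: "nat \<Rightarrow> (nat \<Rightarrow> real) \<Rightarrow> (nat \<Rightarrow> int) \<Rightarrow> real" where
  "lenT m w c = measure lborel (Tset m w c)"

lemma Tset_alt:
  assumes "finite F" "suppi c \<subseteq> F"
  shows "Tset m w c = {x. (\<Sum>a\<in>F. c a * Ji (w a) x) mod int m \<noteq> 0}"
proof -
  have "\<And>x. (\<Sum>a\<in>suppi c. c a * Ji (w a) x) = (\<Sum>a\<in>F. c a * Ji (w a) x)"
    by (rule sum.mono_neutral_left) (use assms in \<open>auto simp: suppi_def\<close>)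
  then show ?thesis unfolding Tset_def by simp
qed

lemma Tset_borel:
  assumes "finite (suppi c)"
  shows "Tset m w c \<in> sets borel"
proof -
  have h: "\<And>x. (\<Sum>a\<in>suppi c. real_of_int (c a) * (indicator {..<w a} x - indicator {..<0} x))
        = real_of_int (\<Sum>a\<in>suppi c. c a * Ji (w a) x)"
    by (auto simp: Ji_def indicator_def of_int_sum intro!: sum.cong)
  have eq: "Tset m w c = {x. \<lfloor>\<Sum>a\<in>suppi c. real_of_int (c a) * (indicator {..<w a} x - indicator {..<0} x)\<rfloor> mod int m \<noteq> 0}"
    unfolding Tset_def by (simp only: h floor_of_int)
  show ?thesis unfolding eq by measurable
qed

lemma Tset_sub:
  assumes "finite F" "suppi c \<subseteq> F" "\<forall>a\<in>F. \<bar>w a\<bar> \<le> R" "0 \<le> R"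
  shows "Tset m w c \<subseteq> {-R..<R}"
proof
  fix x assume x: "x \<in> Tset m w c"
  show "x \<in> {-R..<R}"
  proof (rule ccontr)
    assume "x \<notin> {-R..<R}"
    then have "x < -R \<or> x \<ge> R" by auto
    then have "\<forall>a\<in>F. Ji (w a) x = 0"
      using assms(3,4) by (auto simp: Ji_def abs_le_iff)
    then have "(\<Sum>a\<in>F. c a * Ji (w a) x) = 0" by simp
    then show False using x Tset_alt[OF assms(1,2)] by simp
  qed
qed

lemma lenT_nonneg: "0 \<le> lenT m w c"
  by (simp add: lenT_def)

lemma lenT_le:
  assumes "finite F" "suppi c \<subseteq> F" "\<forall>a\<in>F. \<bar>w a\<bar> \<le> R" "0 \<le> R"
  shows "lenT m w c \<le> 2 * R"
proof -
  have fin: "finite (suppi c)" using assms(1,2) finite_subset by blast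
  have "lenT m w c \<le> measure lborel {-R..<R}"
    unfolding lenT_def
    by (rule measure_mono_fmeasurable) (use Tset_sub[OF assms] Tset_borel[OF fin] assms(4) in \<open>auto simp: fmeasurable_def emeasure_lborel_Ico\<close>)
  also have "\<dots> = 2 * R" using assms(4) by simp
  finally show ?thesis .
qed

lemma suppi_mult: "suppi (\<lambda>a. (c a + c' a) mod int m) \<subseteq> suppi c \<union> suppi c'"
  by (auto simp: suppi_def)

lemma suppi_inv: "suppi (\<lambda>a. (- c a) mod int m) \<subseteq> suppi c"
  by (auto simp: suppi_def)

lemma sum_mod_mult_cong:
  fixes f g :: "nat \<Rightarrow> int"
  shows "(\<Sum>a\<in>F. (f a mod k) * g a) mod k = (\<Sum>a\<in>F. f a * g a) mod k"
proof -
  have "(\<Sum>a\<in>F. (f a mod k) * g a) mod k = (\<Sum>a\<in>F. ((f a mod k) * g a) mod k) mod k"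
    by (simp add: mod_sum_eq)
  also have "\<dots> = (\<Sum>a\<in>F. (f a * g a) mod k) mod k"
    by (simp add: mod_mult_left_eq)
  also have "\<dots> = (\<Sum>a\<in>F. f a * g a) mod k"
    by (simp add: mod_sum_eq)
  finally show ?thesis .
qed

lemma Tset_mult:
  assumes "finite (suppi c)" "finite (suppi c')"
  shows "Tset m w (\<lambda>a. (c a + c' a) mod int m) \<subseteq> Tset m w c \<union> Tset m w c'"
proof
  let ?F = "suppi c \<union> suppi c'"
  have F: "finite ?F" using assms by auto
  fix x assume "x \<in> Tset m w (\<lambda>a. (c a + c' a) mod int m)"
  then have "(\<Sum>a\<in>?F. ((c a + c' a) mod int m) * Ji (w a) x) mod int m \<noteq> 0"
    using Tset_alt[OF F suppi_mult] by simp
  then have "(\<Sum>a\<in>?F. (c a + c' a) * Ji (w a) x) mod int m \<noteq> 0"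
    by (simp add: sum_mod_mult_cong)
  then have "((\<Sum>a\<in>?F. c a * Ji (w a) x) + (\<Sum>a\<in>?F. c' a * Ji (w a) x)) mod int m \<noteq> 0"
    by (simp add: distrib_right sum.distrib)
  then have "(\<Sum>a\<in>?F. c a * Ji (w a) x) mod int m \<noteq> 0 \<or> (\<Sum>a\<in>?F. c' a * Ji (w a) x) mod int m \<noteq> 0"
    using dvd_add[of "int m" "\<Sum>a\<in>?F. c a * Ji (w a) x" "\<Sum>a\<in>?F. c' a * Ji (w a) x"]
    by (auto simp: dvd_eq_mod_eq_0[symmetric])
  then show "x \<in> Tset m w c \<union> Tset m w c'"
    using Tset_alt[OF F, of c m w] Tset_alt[OF F, of c' m w] by auto
qed

lemma lenT_mult:
  assumes "finite (suppi c)" "finite (suppi c')"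
  shows "lenT m w (\<lambda>a. (c a + c' a) mod int m) \<le> lenT m w c + lenT m w c'"
proof -
  have "lenT m w (\<lambda>a. (c a + c' a) mod int m) \<le> measure lborel (Tset m w c \<union> Tset m w c')"
    unfolding lenT_def
  proof (rule measure_mono_fmeasurable)
    show "Tset m w (\<lambda>a. (c a + c' a) mod int m) \<in> sets lborel"
      using Tset_borel[of "(\<lambda>a. (c a + c' a) mod int m)" m w] assms suppi_mult[of c c' m] finite_subset[of _ "suppi c \<union> suppi c'"] by simp
    show "Tset m w (\<lambda>a. (c a + c' a) mod int m) \<subseteq> Tset m w c \<union> Tset m w c'"
      by (rule Tset_mult[OF assms])
    define R where "R = (\<Sum>b\<in>suppi c \<union> suppi c'. \<bar>w b\<bar>)"
    have R0: "0 \<le> R" by (simp add: R_def sum_nonneg)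
    have Rb: "\<forall>a\<in>suppi c \<union> suppi c'. \<bar>w a\<bar> \<le> R"
    proof
      fix a assume "a \<in> suppi c \<union> suppi c'"
      then show "\<bar>w a\<bar> \<le> R" unfolding R_def
        by (rule member_le_sum) (use assms in auto)
    qed
    have s1: "Tset m w c \<subseteq> {-R..<R}"
      by (rule Tset_sub[of "suppi c \<union> suppi c'"]) (use assms Rb R0 in auto)
    have s2: "Tset m w c' \<subseteq> {-R..<R}"
      by (rule Tset_sub[of "suppi c \<union> suppi c'"]) (use assms Rb R0 in auto)
    have "Tset m w c \<union> Tset m w c' \<subseteq> {-R..<R}" using s1 s2 by auto
    moreover have "Tset m w c \<union> Tset m w c' \<in> sets lborel"
      using Tset_borel[OF assms(1), of m w] Tset_borel[OF assms(2), of m w] by auto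
    moreover have fm: "{-R..<R} \<in> fmeasurable lborel"
      using R0 by (simp add: fmeasurable_def emeasure_lborel_Ico)
    ultimately show "Tset m w c \<union> Tset m w c' \<in> fmeasurable lborel"
      using fmeasurableI2[OF fm] by blast
  qed
  also have "\<dots> \<le> lenT m w c + lenT m w c'"
    unfolding lenT_def by (rule measure_Un_le) (use Tset_borel[OF assms(1), of m w] Tset_borel[OF assms(2), of m w] in auto)
  finally show ?thesis .
qed

lemma Tset_inv:
  assumes "finite (suppi c)" "m > 0"
  shows "Tset m w (\<lambda>a. (- c a) mod int m) = Tset m w c"
proof -
  have F: "finite (suppi c)" by fact
  have "\<And>x. (\<Sum>a\<in>suppi c. ((- c a) mod int m) * Ji (w a) x) mod int m = 0
            \<longleftrightarrow> (\<Sum>a\<in>suppi c. c a * Ji (w a) x) mod int m = 0"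
  proof -
    fix x
    have "(\<Sum>a\<in>suppi c. ((- c a) mod int m) * Ji (w a) x) mod int m = (\<Sum>a\<in>suppi c. (- c a) * Ji (w a) x) mod int m"
      by (rule sum_mod_mult_cong)
    also have "\<dots> = (- (\<Sum>a\<in>suppi c. c a * Ji (w a) x)) mod int m"
      by (simp add: sum_negf)
    finally show "?thesis x" by (simp add: dvd_eq_mod_eq_0[symmetric])
  qed
  then show ?thesis
    using Tset_alt[OF F suppi_inv[of c m], where m=m and w=w] Tset_alt[OF F order_refl, where m=m and w=w] by auto
qed

lemma Tset_zero: "Tset m w (\<lambda>a. 0) = {}"
  by (simp add: Tset_def suppi_def)

lemma Tset_cong:
  assumes "finite (suppi c)" "finite (suppi c')" "\<forall>a. c a mod int m = c' a mod int m"
  shows "Tset m w c = Tset m w c'"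
proof -
  let ?F = "suppi c \<union> suppi c'"
  have F: "finite ?F" using assms by auto
  have "\<And>x. (\<Sum>a\<in>?F. c a * Ji (w a) x) mod int m = (\<Sum>a\<in>?F. c' a * Ji (w a) x) mod int m"
  proof -
    fix x
    have e: "(\<Sum>a\<in>?F. (c a mod int m) * Ji (w a) x) = (\<Sum>a\<in>?F. (c' a mod int m) * Ji (w a) x)"
      by (simp add: assms(3))
    show "?thesis x"
      using sum_mod_mult_cong[where k="int m" and f=c and g="\<lambda>a. Ji (w a) x" and F="?F"] sum_mod_mult_cong[where k="int m" and f=c' and g="\<lambda>a. Ji (w a) x" and F="?F"] e
      by simp
  qed
  then show ?thesis using Tset_alt[OF F, of c m w] Tset_alt[OF F, of c' m w] by auto
qed

lemma Tset_diff:
  assumes "a \<noteq> b" "m \<ge> 2"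
  shows "Tset m w (\<lambda>x. (if x = a then 1 else 0) - (if x = b then 1 else 0)) = {min (w a) (w b)..<max (w a) (w b)}"
proof -
  let ?c = "\<lambda>x. (if x = a then 1 else 0) - (if x = b then 1 else (0::int))"
  have F: "finite {a,b}" "suppi ?c \<subseteq> {a,b}" by (auto simp: suppi_def)
  have f1: "\<And>x. (\<Sum>y\<in>{a,b}. ?c y * Ji (w y) x) = (if x < w a then 1 else 0) - (if x < w b then 1 else 0)"
    using assms(1) by (simp add: Ji_def)
  have f2: "\<And>x. (((if x < w a then 1 else 0) - (if x < w b then 1 else 0)::int) mod int m \<noteq> 0) \<longleftrightarrow> ((x < w a) \<noteq> (x < w b))"
  proof -
    fix x show "?thesis x"
      by (cases "x < w a"; cases "x < w b") (use assms(2) in \<open>auto simp: zmod_minus1\<close>)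
  qed
  have "Tset m w ?c = {x. (x < w a) \<noteq> (x < w b)}"
    by (simp only: Tset_alt[OF F] f1 f2)
  also have "\<dots> = {min (w a) (w b)..<max (w a) (w b)}"
    by (auto simp: min_def max_def)
  finally show ?thesis .
qed

lemma lenT_diff:
  assumes "a \<noteq> b" "m \<ge> 2"
  shows "lenT m w (\<lambda>x. (if x = a then 1 else 0) - (if x = b then 1 else 0)) = \<bar>w a - w b\<bar>"
  unfolding lenT_def Tset_diff[OF assms] by simp



definition ev :: "nat \<Rightarrow> nat \<Rightarrow> int" where "ev a = (\<lambda>x. if x = a then 1 else 0)"

locale QS =
  fixes m :: nat and v :: "nat \<Rightarrow> nat \<Rightarrow> real" and B :: "nat \<Rightarrow> real"
    and D :: "nat \<Rightarrow> nat \<Rightarrow> real" and r :: ereal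
  assumes m2: "m \<ge> 2"
    and vB: "\<And>i a. \<bar>v i a\<bar> \<le> B a"
    and vD: "\<And>i a b. \<bar>v i a - v i b\<bar> \<le> D a b"
    and vDw: "\<And>a b. \<exists>i. \<bar>v i a - v i b\<bar> = D a b"
    and D1: "\<And>a b. r = 1 \<Longrightarrow> D a b \<le> 1"
    and D0: "\<And>a. D a a = 0"
begin

definition Q :: "(nat \<Rightarrow> int) \<Rightarrow> real" where "Q c = (SUP i. lenT m (v i) c)"
definition Qr :: "(nat \<Rightarrow> int) \<Rightarrow> real" where "Qr c = (if r = 1 then min 1 (Q c) else Q c)"

lemma m1: "m \<ge> 1" using m2 by simp

lemma carrier_supp: "c \<in> carrier (ZP m n) \<Longrightarrow> suppi c \<subseteq> {..n}"
  by (auto simp: suppi_def)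

lemma carrier_fin: "c \<in> carrier (ZP m n) \<Longrightarrow> finite (suppi c)"
  using carrier_supp finite_subset by blast

lemma lenT_bound:
  assumes "c \<in> carrier (ZP m n)"
  shows "lenT m (v i) c \<le> 2 * (\<Sum>a\<le>n. B a)"
proof (rule lenT_le[OF _ carrier_supp[OF assms]])
  have B0: "\<And>a. 0 \<le> B a" using vB abs_ge_zero order_trans by blast
  show "\<forall>a\<in>{..n}. \<bar>v i a\<bar> \<le> (\<Sum>a\<le>n. B a)"
  proof
    fix a assume "a \<in> {..n}"
    have "\<bar>v i a\<bar> \<le> B a" by (rule vB)
    also have "\<dots> \<le> (\<Sum>a\<le>n. B a)" by (rule member_le_sum) (use \<open>a \<in> {..n}\<close> B0 in auto)
    finally show "\<bar>v i a\<bar> \<le> (\<Sum>a\<le>n. B a)" .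
  qed
  show "0 \<le> (\<Sum>a\<le>n. B a)" by (rule sum_nonneg) (use B0 in auto)
qed simp

lemma bdd: "c \<in> carrier (ZP m n) \<Longrightarrow> bdd_above (range (\<lambda>i. lenT m (v i) c))"
  using lenT_bound by (intro bdd_aboveI2) blast

lemma Q_ge: "c \<in> carrier (ZP m n) \<Longrightarrow> lenT m (v i) c \<le> Q c"
  unfolding Q_def by (rule cSUP_upper[OF _ bdd]) auto

lemma Q_nonneg: "c \<in> carrier (ZP m n) \<Longrightarrow> 0 \<le> Q c"
  using Q_ge lenT_nonneg order_trans by blast

lemma Q_le: "c \<in> carrier (ZP m n) \<Longrightarrow> (\<And>i. lenT m (v i) c \<le> K) \<Longrightarrow> Q c \<le> K"
  unfolding Q_def by (rule cSUP_least) auto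

lemma Q_mult:
  assumes "c \<in> carrier (ZP m n)" "c' \<in> carrier (ZP m n)"
  shows "Q (c \<otimes>\<^bsub>ZP m n\<^esub> c') \<le> Q c + Q c'"
proof -
  have cc: "c \<otimes>\<^bsub>ZP m n\<^esub> c' \<in> carrier (ZP m n)"
    using assms m1 comm_group.axioms(2)[OF ZP_comm_group] by (meson group.subgroup_self subgroup.m_closed ZP_comm_group comm_group_def)
  show ?thesis
  proof (rule Q_le[OF cc])
    fix i
    have "lenT m (v i) (c \<otimes>\<^bsub>ZP m n\<^esub> c') \<le> lenT m (v i) c + lenT m (v i) c'"
      unfolding ZP_simps by (rule lenT_mult) (use carrier_fin assms in auto)
    also have "\<dots> \<le> Q c + Q c'" using Q_ge assms by (meson add_mono)
    finally show "lenT m (v i) (c \<otimes>\<^bsub>ZP m n\<^esub> c') \<le> Q c + Q c'" .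
  qed
qed

lemma Q_inv:
  assumes "c \<in> carrier (ZP m n)"
  shows "Q (inv\<^bsub>ZP m n\<^esub> c) = Q c"
proof -
  have "\<And>i. lenT m (v i) (inv\<^bsub>ZP m n\<^esub> c) = lenT m (v i) c"
    unfolding ZP_inv[OF m1 assms] lenT_def
    using Tset_inv[OF carrier_fin[OF assms]] m1 by simp
  then show ?thesis unfolding Q_def by simp
qed

lemma Q_one: "Q (\<lambda>a. 0) = 0"
  unfolding Q_def lenT_def Tset_zero by simp

lemma ev_carrier: "a \<le> n \<Longrightarrow> ev a \<in> carrier (ZP m n)"
  using m2 by (auto simp: ev_def)

lemma Q_diff:
  assumes "a \<le> n" "b \<le> n"
  shows "Q (ev a \<otimes>\<^bsub>ZP m n\<^esub> inv\<^bsub>ZP m n\<^esub> ev b) = D a b"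
proof -
  let ?c = "ev a \<otimes>\<^bsub>ZP m n\<^esub> inv\<^bsub>ZP m n\<^esub> ev b"
  have cc: "?c \<in> carrier (ZP m n)"
    by (meson ZP_comm_group assms comm_group.axioms(2) ev_carrier group.inv_closed m1 monoid.m_closed group.is_monoid)
  show ?thesis
  proof (cases "a = b")
    case True
    then have "?c = (\<lambda>x. 0)"
      using ZP_comm_group[OF m1] ev_carrier[OF assms(2)]
      by (metis ZP_simps(3) comm_group.axioms(2) group.r_inv)
    then show ?thesis using Q_one D0 True by simp
  next
    case False
    let ?d = "\<lambda>x. (if x = a then 1 else 0) - (if x = b then 1 else (0::int))"
    have inv_eq: "inv\<^bsub>ZP m n\<^esub> ev b = (\<lambda>x. (- ev b x) mod int m)"
      by (rule ZP_inv[OF m1 ev_carrier[OF assms(2)]])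
    have cong: "\<forall>x. ?c x mod int m = ?d x mod int m"
      unfolding ZP_simps inv_eq
      by (simp add: ev_def mod_add_right_eq)
    have fd: "finite (suppi ?d)"
      by (rule finite_subset[of _ "{a,b}"]) (auto simp: suppi_def)
    have "\<And>i. lenT m (v i) ?c = \<bar>v i a - v i b\<bar>"
      unfolding lenT_def Tset_cong[OF carrier_fin[OF cc] fd cong]
      using lenT_diff[OF False m2] unfolding lenT_def by simp
    then have "Q ?c = (SUP i. \<bar>v i a - v i b\<bar>)" unfolding Q_def by simp
    also have "\<dots> = D a b"
    proof (rule antisym)
      show "(SUP i. \<bar>v i a - v i b\<bar>) \<le> D a b" by (rule cSUP_least) (auto intro: vD)
      obtain i where i: "\<bar>v i a - v i b\<bar> = D a b" using vDw by blast
      have bd: "bdd_above (range (\<lambda>i. \<bar>v i a - v i b\<bar>))"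
        by (rule bdd_aboveI2[where M="D a b"]) (rule vD)
      have "\<bar>v i a - v i b\<bar> \<le> (SUP i. \<bar>v i a - v i b\<bar>)"
        by (rule cSUP_upper[OF UNIV_I bd])
      then show "D a b \<le> (SUP i. \<bar>v i a - v i b\<bar>)" using i by simp
    qed
    finally show ?thesis .
  qed
qed

end



context QS begin

lemma ZPc: "comm_group (ZP m n)" by (rule ZP_comm_group[OF m1])
lemma ZPg: "group (ZP m n)" using ZPc comm_group.axioms(2) by blast

lemma ZP_mclosed: "x \<in> carrier (ZP m n) \<Longrightarrow> y \<in> carrier (ZP m n) \<Longrightarrow> x \<otimes>\<^bsub>ZP m n\<^esub> y \<in> carrier (ZP m n)"
  using ZPg by (meson group.is_monoid monoid.m_closed)

lemma ZP_iclosed: "x \<in> carrier (ZP m n) \<Longrightarrow> inv\<^bsub>ZP m n\<^esub> x \<in> carrier (ZP m n)"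
  using ZPg by (meson group.inv_closed)

lemma Qr_nonneg: "c \<in> carrier (ZP m n) \<Longrightarrow> 0 \<le> Qr c"
  using Q_nonneg by (simp add: Qr_def)

lemma Qr_le_Q: "Qr c \<le> Q c"
  by (simp add: Qr_def)

lemma Qr_le1: "r = 1 \<Longrightarrow> Qr c \<le> 1"
  unfolding Qr_def by auto

lemma Qr_mult:
  assumes "c \<in> carrier (ZP m n)" "c' \<in> carrier (ZP m n)"
  shows "Qr (c \<otimes>\<^bsub>ZP m n\<^esub> c') \<le> Qr c + Qr c'"
  using Q_mult[OF assms] Q_nonneg[OF assms(1)] Q_nonneg[OF assms(2)]
  unfolding Qr_def by (auto simp: min_def)

lemma Qr_inv: "c \<in> carrier (ZP m n) \<Longrightarrow> Qr (inv\<^bsub>ZP m n\<^esub> c) = Qr c"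
  using Q_inv by (simp add: Qr_def)

lemma Qr_one: "Qr (\<lambda>a. 0) = 0"
  using Q_one by (simp add: Qr_def)

lemma Qr_diff:
  assumes "a \<le> n" "b \<le> n"
  shows "Qr (ev a \<otimes>\<^bsub>ZP m n\<^esub> inv\<^bsub>ZP m n\<^esub> ev b) = D a b"
  using Q_diff[OF assms] D1[of a b] by (simp add: Qr_def)

lemma Q_ev: "Q (ev a) \<le> 2 * (\<Sum>b\<le>a. B b)"
  by (rule Q_le[OF ev_carrier[of a a]]) (use lenT_bound[OF ev_carrier[of a a]] in auto)

lemma Qr_ev: "Qr (ev a) \<le> 2 * (\<Sum>b\<le>a. B b)"
  using Q_ev Qr_le_Q order_trans by blast

definition qv :: "real \<Rightarrow> (nat \<Rightarrow> int) \<Rightarrow> real" where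
  "qv \<delta> c = (1 - \<delta>) * Qr c + \<delta> * (if c = (\<lambda>a. 0) then 0 else 1)"

lemma ZP_inv_one:
  assumes "x \<in> carrier (ZP m n)"
  shows "inv\<^bsub>ZP m n\<^esub> x = (\<lambda>a. 0) \<longleftrightarrow> x = (\<lambda>a. 0)"
proof -
  interpret group "ZP m n" by (rule ZPg)
  show ?thesis using assms inv_eq_1_iff[OF assms] by simp
qed

lemma qv_value:
  assumes "0 < \<delta>" "\<delta> \<le> 1"
  shows "is_value_on (ZP m n) (qv \<delta>)"
  unfolding is_value_on_def
proof (intro conjI ballI)
  fix x assume x: "x \<in> carrier (ZP m n)"
  show "0 \<le> qv \<delta> x" unfolding qv_def using Qr_nonneg[OF x] assms by simp
  show "(qv \<delta> x = 0) = (x = \<one>\<^bsub>ZP m n\<^esub>)"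
  proof (cases "x = (\<lambda>a. 0)")
    case True then show ?thesis by (simp add: qv_def Qr_one)
  next
    case False
    have "0 \<le> (1 - \<delta>) * Qr x" using Qr_nonneg[OF x] assms by simp
    then have "qv \<delta> x > 0" unfolding qv_def using False assms by simp
    then show ?thesis using False by simp
  qed
  show "qv \<delta> (inv\<^bsub>ZP m n\<^esub> x) = qv \<delta> x"
    unfolding qv_def Qr_inv[OF x] ZP_inv_one[OF x] by simp
next
  fix x y assume x: "x \<in> carrier (ZP m n)" and y: "y \<in> carrier (ZP m n)"
  have q: "(1 - \<delta>) * Qr (x \<otimes>\<^bsub>ZP m n\<^esub> y) \<le> (1 - \<delta>) * Qr x + (1 - \<delta>) * Qr y"
    using Qr_mult[OF x y] assms by (simp add: mult_left_mono flip: distrib_left)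
  have i: "(if x \<otimes>\<^bsub>ZP m n\<^esub> y = (\<lambda>a. 0) then 0 else 1) \<le> (if x = (\<lambda>a. 0) then 0 else 1) + (if y = (\<lambda>a. 0) then 0 else (1::real))"
    using ZPg x y by (auto simp: group.is_monoid monoid.l_one)
  show "qv \<delta> (x \<otimes>\<^bsub>ZP m n\<^esub> y) \<le> qv \<delta> x + qv \<delta> y"
    unfolding qv_def using q mult_left_mono[OF i, of \<delta>] assms by (simp add: distrib_left)
qed

lemma qv_nonneg: "0 < \<delta> \<Longrightarrow> \<delta> \<le> 1 \<Longrightarrow> c \<in> carrier (ZP m n) \<Longrightarrow> 0 \<le> qv \<delta> c"
  using qv_value unfolding is_value_on_def by blast

lemma qv_le_r:
  assumes "r = 1 \<or> r = \<infinity>" "0 < \<delta>" "\<delta> \<le> 1"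
  shows "ereal (qv \<delta> c) \<le> r"
proof (cases "r = 1")
  case True
  have "(1 - \<delta>) * Qr c \<le> (1 - \<delta>) * 1" using Qr_le1[OF True] assms by (intro mult_left_mono) auto
  then have "qv \<delta> c \<le> 1" unfolding qv_def using assms by auto
  then show ?thesis using True by (simp add: one_ereal_def)
next
  case False then show ?thesis using assms by simp
qed

lemma ev_diff_zero:
  assumes "a \<le> n" "b \<le> n"
  shows "(ev a \<otimes>\<^bsub>ZP m n\<^esub> inv\<^bsub>ZP m n\<^esub> ev b = (\<lambda>x. 0)) \<longleftrightarrow> a = b"
proof -
  have inv_eq: "inv\<^bsub>ZP m n\<^esub> ev b = (\<lambda>x. (- ev b x) mod int m)"
    by (rule ZP_inv[OF m1 ev_carrier[OF assms(2)]])
  show ?thesis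
  proof
    assume h: "ev a \<otimes>\<^bsub>ZP m n\<^esub> inv\<^bsub>ZP m n\<^esub> ev b = (\<lambda>x. 0)"
    show "a = b"
    proof (rule ccontr)
      assume "a \<noteq> b"
      then have "(ev a \<otimes>\<^bsub>ZP m n\<^esub> inv\<^bsub>ZP m n\<^esub> ev b) a = 1"
        unfolding ZP_simps inv_eq using m2 by (simp add: ev_def)
      moreover have "(ev a \<otimes>\<^bsub>ZP m n\<^esub> inv\<^bsub>ZP m n\<^esub> ev b) a = 0" using h by (rule fun_cong)
      ultimately show False by simp
    qed
  next
    assume "a = b"
    then show "ev a \<otimes>\<^bsub>ZP m n\<^esub> inv\<^bsub>ZP m n\<^esub> ev b = (\<lambda>x. 0)"
      using ZPg ev_carrier[OF assms(2)] by (metis ZP_simps(3) group.r_inv)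
  qed
qed

lemma qv_diff:
  assumes "a \<le> n" "b \<le> n"
  shows "qv \<delta> (ev a \<otimes>\<^bsub>ZP m n\<^esub> inv\<^bsub>ZP m n\<^esub> ev b) = (1 - \<delta>) * D a b + \<delta> * (if a = b then 0 else 1)"
  unfolding qv_def Qr_diff[OF assms] ev_diff_zero[OF assms] by simp

end



lemma DirProd_pow:
  assumes "monoid G" "monoid H" "a \<in> carrier G" "b \<in> carrier H"
  shows "(a, b) [^]\<^bsub>G \<times>\<times> H\<^esub> (n::nat) = (a [^]\<^bsub>G\<^esub> n, b [^]\<^bsub>H\<^esub> n)"
proof (induction n)
  case 0
  show ?case using monoid.nat_pow_0[OF DirProd_monoid[OF assms(1,2)]] monoid.nat_pow_0[OF assms(1)] monoid.nat_pow_0[OF assms(2)]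
    by simp
next
  case (Suc n)
  have "(a, b) [^]\<^bsub>G \<times>\<times> H\<^esub> Suc n = (a, b) [^]\<^bsub>G \<times>\<times> H\<^esub> n \<otimes>\<^bsub>G \<times>\<times> H\<^esub> (a, b)"
    by (rule monoid.nat_pow_Suc[OF DirProd_monoid[OF assms(1,2)]])
  also have "\<dots> = (a [^]\<^bsub>G\<^esub> n \<otimes>\<^bsub>G\<^esub> a, b [^]\<^bsub>H\<^esub> n \<otimes>\<^bsub>H\<^esub> b)"
    unfolding Suc by simp
  also have "\<dots> = (a [^]\<^bsub>G\<^esub> Suc n, b [^]\<^bsub>H\<^esub> Suc n)"
    using monoid.nat_pow_Suc[OF assms(1)] monoid.nat_pow_Suc[OF assms(2)] by simp
  finally show ?case .
qed

lemma DirProd_comm_group: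
  assumes "comm_group G" "comm_group H"
  shows "comm_group (G \<times>\<times> H)"
proof -
  have g: "group (G \<times>\<times> H)" by (rule DirProd_group[OF comm_group.axioms(2)[OF assms(1)] comm_group.axioms(2)[OF assms(2)]])
  show ?thesis
  proof (rule group.group_comm_groupI[OF g])
    fix x y assume xy: "x \<in> carrier (G \<times>\<times> H)" "y \<in> carrier (G \<times>\<times> H)"
    obtain x1 x2 y1 y2 where e: "x = (x1, x2)" "y = (y1, y2)" by (cases x, cases y) auto
    have m: "x1 \<in> carrier G" "x2 \<in> carrier H" "y1 \<in> carrier G" "y2 \<in> carrier H" using xy e by auto
    have c1: "x1 \<otimes>\<^bsub>G\<^esub> y1 = y1 \<otimes>\<^bsub>G\<^esub> x1"
      by (rule comm_monoid.m_comm[OF comm_group.axioms(1)[OF assms(1)] m(1,3)])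
    have c2: "x2 \<otimes>\<^bsub>H\<^esub> y2 = y2 \<otimes>\<^bsub>H\<^esub> x2"
      by (rule comm_monoid.m_comm[OF comm_group.axioms(1)[OF assms(2)] m(2,4)])
    show "x \<otimes>\<^bsub>G \<times>\<times> H\<^esub> y = y \<otimes>\<^bsub>G \<times>\<times> H\<^esub> x"
      unfolding e mult_DirProd c1 c2 ..
  qed
qed

lemma value_min1:
  assumes "is_value_on G q"
  shows "is_value_on G (\<lambda>x. min 1 (q x))"
proof -
  have a: "\<forall>x\<in>carrier G. q x \<ge> 0" "\<forall>x\<in>carrier G. q x = 0 \<longleftrightarrow> x = \<one>\<^bsub>G\<^esub>"
     "\<forall>x\<in>carrier G. q (inv\<^bsub>G\<^esub> x) = q x"
     "\<forall>x\<in>carrier G. \<forall>y\<in>carrier G. q (x \<otimes>\<^bsub>G\<^esub> y) \<le> q x + q y"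
    using assms unfolding is_value_on_def by blast+
  have "\<forall>x\<in>carrier G. \<forall>y\<in>carrier G. min 1 (q (x \<otimes>\<^bsub>G\<^esub> y)) \<le> min 1 (q x) + min 1 (q y)"
  proof (intro ballI)
    fix x y assume xy: "x \<in> carrier G" "y \<in> carrier G"
    have "q (x \<otimes>\<^bsub>G\<^esub> y) \<le> q x + q y" "0 \<le> q x" "0 \<le> q y" using a xy by auto
    then show "min 1 (q (x \<otimes>\<^bsub>G\<^esub> y)) \<le> min 1 (q x) + min 1 (q y)" by (simp add: min_def)
  qed
  moreover have "\<forall>x\<in>carrier G. min 1 (q x) = 0 \<longleftrightarrow> x = \<one>\<^bsub>G\<^esub>"
  proof
    fix x assume "x \<in> carrier G"
    then show "min 1 (q x) = 0 \<longleftrightarrow> x = \<one>\<^bsub>G\<^esub>" using a(2) by (cases "1 \<le> q x") (auto simp: min_def)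
  qed
  ultimately show ?thesis using a(1,3) unfolding is_value_on_def by simp
qed

definition is_pvalue_on :: "('h, 'm) monoid_scheme \<Rightarrow> ('h \<Rightarrow> real) \<Rightarrow> bool" where
  "is_pvalue_on H q \<longleftrightarrow> (\<forall>x\<in>carrier H. q x \<ge> 0) \<and> q \<one>\<^bsub>H\<^esub> = 0 \<and>
     (\<forall>x\<in>carrier H. q (inv\<^bsub>H\<^esub> x) = q x) \<and>
     (\<forall>x\<in>carrier H. \<forall>y\<in>carrier H. q (x \<otimes>\<^bsub>H\<^esub> y) \<le> q x + q y)"

lemma value_add_pvalue:
  assumes "is_value_on G q" "is_pvalue_on G q'" "group G"
  shows "is_value_on G (\<lambda>x. q x + q' x)"
proof -
  have one: "\<one>\<^bsub>G\<^esub> \<in> carrier G" using assms(3) group.is_monoid monoid.one_closed by blast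
  show ?thesis
    using assms(1,2) one unfolding is_value_on_def is_pvalue_on_def
    by (smt (verit, best))
qed

lemma pvalue_scale:
  assumes "is_pvalue_on G q" "0 \<le> k"
  shows "is_pvalue_on G (\<lambda>x. k * q x)"
  using assms unfolding is_pvalue_on_def by (auto simp: distrib_left[symmetric] intro: mult_left_mono)

lemma value_scale:
  assumes "is_value_on G q" "0 < k"
  shows "is_value_on G (\<lambda>x. k * q x)"
  using assms unfolding is_value_on_def by (auto simp: distrib_left[symmetric] intro: mult_left_mono)

lemma pvalue_add:
  assumes "is_pvalue_on G q" "is_pvalue_on G q'"
  shows "is_pvalue_on G (\<lambda>x. q x + q' x)"
  using assms unfolding is_pvalue_on_def by (smt (verit, best))



lemma G2_gen:
  fixes A :: "'b monoid" and p :: "'g::ab_group_add \<Rightarrow> real"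
  assumes G2: "G2_property r N p"
    and cg: "comm_group A" and fin: "finite (carrier A)"
    and ex: "N \<noteq> 0 \<longrightarrow> (\<forall>x\<in>carrier A. x [^]\<^bsub>A\<^esub> N = \<one>\<^bsub>A\<^esub>)"
    and val: "is_value_on A q" and qr: "\<forall>x\<in>carrier A. ereal (q x) \<le> r"
    and sub: "subgroup K A"
    and phom: "\<forall>x\<in>K. \<forall>y\<in>K. \<phi> (x \<otimes>\<^bsub>A\<^esub> y) = \<phi> x + \<phi> y"
    and piso: "\<forall>x\<in>K. p (\<phi> x) = q x"
    and eps: "0 < \<epsilon>" "\<epsilon> < 1"
  shows "\<exists>\<psi>. (\<forall>x\<in>carrier A. \<forall>y\<in>carrier A. \<psi> (x \<otimes>\<^bsub>A\<^esub> y) = \<psi> x + \<psi> y) \<and>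
             (\<forall>x\<in>K. p (\<phi> x - \<psi> x) \<le> \<epsilon>) \<and>
             (\<forall>x\<in>carrier A. (1 - \<epsilon>) * q x \<le> p (\<psi> x) \<and> p (\<psi> x) \<le> (1 + \<epsilon>) * q x)"
proof -
  obtain h where h: "bij_betw h (carrier A) {0..<card (carrier A)}"
    using ex_bij_betw_finite_nat[OF fin] by blast
  define g where "g = inv_into (carrier A) h"
  define H :: "nat monoid" where
    "H = \<lparr>carrier = {0..<card (carrier A)}, mult = (\<lambda>x y. h (g x \<otimes>\<^bsub>A\<^esub> g y)), one = h \<one>\<^bsub>A\<^esub>\<rparr>"
  have cH: "carrier H = {0..<card (carrier A)}" and mH: "\<And>x y. x \<otimes>\<^bsub>H\<^esub> y = h (g x \<otimes>\<^bsub>A\<^esub> g y)"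
    and oH: "\<one>\<^bsub>H\<^esub> = h \<one>\<^bsub>A\<^esub>" by (simp_all add: H_def)
  have gh: "\<And>x. x \<in> carrier A \<Longrightarrow> g (h x) = x"
    using h unfolding g_def bij_betw_def by (simp add: inv_into_f_f)
  have hg: "\<And>y. y \<in> carrier H \<Longrightarrow> h (g y) = y"
    using h unfolding g_def bij_betw_def cH by (simp add: f_inv_into_f)
  have gin: "\<And>y. y \<in> carrier H \<Longrightarrow> g y \<in> carrier A"
    using h unfolding g_def bij_betw_def cH by (metis inv_into_into)
  have hin: "\<And>x. x \<in> carrier A \<Longrightarrow> h x \<in> carrier H"
    using h unfolding bij_betw_def cH by blast
  interpret A: comm_group A by (rule cg)
  have hhom: "\<And>x y. x \<in> carrier A \<Longrightarrow> y \<in> carrier A \<Longrightarrow> h (x \<otimes>\<^bsub>A\<^esub> y) = h x \<otimes>\<^bsub>H\<^esub> h y"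
    using gh by (simp add: mH)
  have iso: "h \<in> iso A H"
    unfolding iso_def hom_def using hin hhom h cH by (auto simp: Pi_def)
  have "comm_group (H\<lparr>one := h \<one>\<^bsub>A\<^esub>\<rparr>)" by (rule A.iso_imp_img_comm_group[OF iso])
  moreover have "H\<lparr>one := h \<one>\<^bsub>A\<^esub>\<rparr> = H" by (simp add: H_def)
  ultimately have cgH: "comm_group H" by simp
  interpret H: comm_group H by (rule cgH)
  have ghom: "group_hom A H h"
    unfolding group_hom_def group_hom_axioms_def using iso A.is_group H.is_group
    by (simp add: iso_def)
  have hinv: "\<And>x. x \<in> carrier A \<Longrightarrow> inv\<^bsub>H\<^esub> (h x) = h (inv\<^bsub>A\<^esub> x)"
    using group_hom.hom_inv[OF ghom] by simp
  have hpow: "\<And>x. x \<in> carrier A \<Longrightarrow> (h x) [^]\<^bsub>H\<^esub> N = h (x [^]\<^bsub>A\<^esub> N)"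
    using group_hom.hom_nat_pow[OF ghom] by simp
  have hinj: "\<And>x y. x \<in> carrier A \<Longrightarrow> y \<in> carrier A \<Longrightarrow> h x = h y \<Longrightarrow> x = y"
    using h unfolding bij_betw_def inj_on_def by blast
  have G2': "\<And>(H'::nat monoid) q' K' \<phi>' \<epsilon>'. comm_group H' \<and> finite (carrier H') \<and>
       (N \<noteq> 0 \<longrightarrow> (\<forall>x\<in>carrier H'. x [^]\<^bsub>H'\<^esub> N = \<one>\<^bsub>H'\<^esub>)) \<and>
       is_value_on H' q' \<and> (\<forall>x\<in>carrier H'. ereal (q' x) \<le> r) \<and>
       subgroup K' H' \<and>
       (\<forall>x\<in>K'. \<forall>y\<in>K'. \<phi>' (x \<otimes>\<^bsub>H'\<^esub> y) = \<phi>' x + \<phi>' y) \<and>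
       (\<forall>x\<in>K'. p (\<phi>' x) = q' x) \<and>
       0 < \<epsilon>' \<and> \<epsilon>' < 1
     \<Longrightarrow> (\<exists>\<psi> :: nat \<Rightarrow> 'g.
            (\<forall>x\<in>carrier H'. \<forall>y\<in>carrier H'. \<psi> (x \<otimes>\<^bsub>H'\<^esub> y) = \<psi> x + \<psi> y) \<and>
            (\<forall>x\<in>K'. p (\<phi>' x - \<psi> x) \<le> \<epsilon>') \<and>
            (\<forall>x\<in>carrier H'. (1 - \<epsilon>') * q' x \<le> p (\<psi> x) \<and> p (\<psi> x) \<le> (1 + \<epsilon>') * q' x))"
    using G2 unfolding G2_property_def by blast
  have f1: "finite (carrier H)" by (simp add: cH)
  have f2: "N \<noteq> 0 \<longrightarrow> (\<forall>y\<in>carrier H. y [^]\<^bsub>H\<^esub> N = \<one>\<^bsub>H\<^esub>)"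
  proof (intro impI ballI)
    fix y assume N: "N \<noteq> 0" and y: "y \<in> carrier H"
    have "y [^]\<^bsub>H\<^esub> N = h (g y [^]\<^bsub>A\<^esub> N)" using hpow[OF gin[OF y]] hg[OF y] by simp
    also have "\<dots> = \<one>\<^bsub>H\<^esub>" using ex N gin[OF y] oH by simp
    finally show "y [^]\<^bsub>H\<^esub> N = \<one>\<^bsub>H\<^esub>" .
  qed
  have f3: "is_value_on H (\<lambda>y. q (g y))"
    unfolding is_value_on_def
  proof (intro conjI ballI)
    fix y assume y: "y \<in> carrier H"
    have va: "\<forall>x\<in>carrier A. q x \<ge> 0" "\<forall>x\<in>carrier A. q x = 0 \<longleftrightarrow> x = \<one>\<^bsub>A\<^esub>"
      "\<forall>x\<in>carrier A. q (inv\<^bsub>A\<^esub> x) = q x"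
      "\<forall>x\<in>carrier A. \<forall>y\<in>carrier A. q (x \<otimes>\<^bsub>A\<^esub> y) \<le> q x + q y"
      using val unfolding is_value_on_def by blast+
    show "0 \<le> q (g y)" using va(1) gin[OF y] by blast
    have "q (g y) = 0 \<longleftrightarrow> g y = \<one>\<^bsub>A\<^esub>" using va(2) gin[OF y] by blast
    also have "\<dots> \<longleftrightarrow> y = \<one>\<^bsub>H\<^esub>"
      using hg[OF y] gh[OF A.one_closed] oH by metis
    finally show "(q (g y) = 0) = (y = \<one>\<^bsub>H\<^esub>)" .
    have "g (inv\<^bsub>H\<^esub> y) = inv\<^bsub>A\<^esub> (g y)"
      using hinv[OF gin[OF y]] hg[OF y] gh A.inv_closed[OF gin[OF y]] by metis
    then show "q (g (inv\<^bsub>H\<^esub> y)) = q (g y)" using va(3) gin[OF y] by simp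
  next
    fix x y assume x: "x \<in> carrier H" and y: "y \<in> carrier H"
    have "g (x \<otimes>\<^bsub>H\<^esub> y) = g x \<otimes>\<^bsub>A\<^esub> g y"
      unfolding mH using gh A.m_closed[OF gin[OF x] gin[OF y]] by simp
    then show "q (g (x \<otimes>\<^bsub>H\<^esub> y)) \<le> q (g x) + q (g y)"
      using val gin[OF x] gin[OF y] unfolding is_value_on_def by simp
  qed
  have f4: "\<forall>y\<in>carrier H. ereal (q (g y)) \<le> r" using qr gin by blast
  have f5: "subgroup (h ` K) H"
    by (rule subgroup.iso_subgroup[OF sub A.is_group H.is_group iso])
  have Kc: "\<And>x. x \<in> K \<Longrightarrow> x \<in> carrier A" by (rule subgroup.mem_carrier[OF sub])
  have f6: "\<forall>x\<in>h ` K. \<forall>y\<in>h ` K. \<phi> (g (x \<otimes>\<^bsub>H\<^esub> y)) = \<phi> (g x) + \<phi> (g y)"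
  proof (intro ballI)
    fix x y assume "x \<in> h ` K" "y \<in> h ` K"
    then obtain a b where ab: "a \<in> K" "b \<in> K" "x = h a" "y = h b" by blast
    have e: "x \<otimes>\<^bsub>H\<^esub> y = h (a \<otimes>\<^bsub>A\<^esub> b)"
      using hhom[OF Kc[OF ab(1)] Kc[OF ab(2)]] ab(3,4) by simp
    have "g (x \<otimes>\<^bsub>H\<^esub> y) = a \<otimes>\<^bsub>A\<^esub> b"
      unfolding e by (rule gh[OF A.m_closed[OF Kc[OF ab(1)] Kc[OF ab(2)]]])
    then show "\<phi> (g (x \<otimes>\<^bsub>H\<^esub> y)) = \<phi> (g x) + \<phi> (g y)"
      using ab Kc gh phom by simp
  qed
  have f7: "\<forall>x\<in>h ` K. p (\<phi> (g x)) = q (g x)" using piso Kc gh by auto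
  obtain \<psi>' :: "nat \<Rightarrow> 'g" where
    ps: "\<forall>x\<in>carrier H. \<forall>y\<in>carrier H. \<psi>' (x \<otimes>\<^bsub>H\<^esub> y) = \<psi>' x + \<psi>' y"
        "\<forall>x\<in>h ` K. p (\<phi> (g x) - \<psi>' x) \<le> \<epsilon>"
        "\<forall>x\<in>carrier H. (1 - \<epsilon>) * q (g x) \<le> p (\<psi>' x) \<and> p (\<psi>' x) \<le> (1 + \<epsilon>) * q (g x)"
    using G2'[of H "\<lambda>y. q (g y)" "h ` K" "\<lambda>y. \<phi> (g y)" \<epsilon>] cgH f1 f2 f3 f4 f5 f6 f7 eps by blast
  show ?thesis
  proof (intro exI[of _ "\<lambda>x. \<psi>' (h x)"] conjI ballI)
    fix x y assume x: "x \<in> carrier A" and y: "y \<in> carrier A"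
    show "\<psi>' (h (x \<otimes>\<^bsub>A\<^esub> y)) = \<psi>' (h x) + \<psi>' (h y)"
      using hhom[OF x y] ps(1) hin[OF x] hin[OF y] by simp
  next
    fix x assume x: "x \<in> K"
    show "p (\<phi> x - \<psi>' (h x)) \<le> \<epsilon>" using ps(2) x gh[OF Kc[OF x]] by force
  next
    fix x assume x: "x \<in> carrier A"
    show "(1 - \<epsilon>) * q x \<le> p (\<psi>' (h x))" "p (\<psi>' (h x)) \<le> (1 + \<epsilon>) * q x"
      using ps(3) hin[OF x] gh[OF x] by force+
  qed
qed



lemma glue:
  fixes G1 :: "'b monoid" and G2 :: "'b monoid"
  assumes cg1: "comm_group G1" and cg2: "comm_group G2" and fin1: "finite (carrier G1)"
    and sub: "carrier G1 \<subseteq> carrier G2"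
    and mult_eq: "\<And>x y. x \<in> carrier G1 \<Longrightarrow> y \<in> carrier G1 \<Longrightarrow> x \<otimes>\<^bsub>G1\<^esub> y = x \<otimes>\<^bsub>G2\<^esub> y"
    and one_eq: "\<one>\<^bsub>G1\<^esub> = \<one>\<^bsub>G2\<^esub>"
    and v1: "is_value_on G1 q1" and v2: "is_value_on G2 q2" and ve: "is_value_on G1 \<eta>"
    and c1: "\<And>c. c \<in> carrier G1 \<Longrightarrow> q1 c \<le> q2 c + \<eta> c"
    and c2: "\<And>c. c \<in> carrier G1 \<Longrightarrow> q2 c \<le> q1 c + \<eta> c"
  defines "qA \<equiv> \<lambda>(a,b). Min ((\<lambda>c. q1 (a \<otimes>\<^bsub>G1\<^esub> inv\<^bsub>G1\<^esub> c) + q2 (b \<otimes>\<^bsub>G2\<^esub> c) + \<eta> c) ` carrier G1)"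
  shows "is_value_on (G1 \<times>\<times> G2) qA"
    and "\<And>a. a \<in> carrier G1 \<Longrightarrow> qA (a, \<one>\<^bsub>G2\<^esub>) = q1 a"
    and "\<And>b. b \<in> carrier G2 \<Longrightarrow> qA (\<one>\<^bsub>G1\<^esub>, b) = q2 b"
    and "\<And>c. c \<in> carrier G1 \<Longrightarrow> qA (inv\<^bsub>G1\<^esub> c, c) \<le> \<eta> c"
proof -
  interpret G1: comm_group G1 by (rule cg1)
  interpret G2: comm_group G2 by (rule cg2)
  have V1: "\<And>x. x \<in> carrier G1 \<Longrightarrow> q1 x \<ge> 0" "\<And>x. x \<in> carrier G1 \<Longrightarrow> q1 x = 0 \<longleftrightarrow> x = \<one>\<^bsub>G1\<^esub>"
     "\<And>x. x \<in> carrier G1 \<Longrightarrow> q1 (inv\<^bsub>G1\<^esub> x) = q1 x"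
     "\<And>x y. x \<in> carrier G1 \<Longrightarrow> y \<in> carrier G1 \<Longrightarrow> q1 (x \<otimes>\<^bsub>G1\<^esub> y) \<le> q1 x + q1 y"
    using v1 unfolding is_value_on_def by blast+
  have V2: "\<And>x. x \<in> carrier G2 \<Longrightarrow> q2 x \<ge> 0" "\<And>x. x \<in> carrier G2 \<Longrightarrow> q2 x = 0 \<longleftrightarrow> x = \<one>\<^bsub>G2\<^esub>"
     "\<And>x. x \<in> carrier G2 \<Longrightarrow> q2 (inv\<^bsub>G2\<^esub> x) = q2 x"
     "\<And>x y. x \<in> carrier G2 \<Longrightarrow> y \<in> carrier G2 \<Longrightarrow> q2 (x \<otimes>\<^bsub>G2\<^esub> y) \<le> q2 x + q2 y"
    using v2 unfolding is_value_on_def by blast+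
  have VE: "\<And>x. x \<in> carrier G1 \<Longrightarrow> \<eta> x \<ge> 0" "\<And>x. x \<in> carrier G1 \<Longrightarrow> \<eta> x = 0 \<longleftrightarrow> x = \<one>\<^bsub>G1\<^esub>"
     "\<And>x. x \<in> carrier G1 \<Longrightarrow> \<eta> (inv\<^bsub>G1\<^esub> x) = \<eta> x"
     "\<And>x y. x \<in> carrier G1 \<Longrightarrow> y \<in> carrier G1 \<Longrightarrow> \<eta> (x \<otimes>\<^bsub>G1\<^esub> y) \<le> \<eta> x + \<eta> y"
    using ve unfolding is_value_on_def by blast+
  have inv_eq: "\<And>c. c \<in> carrier G1 \<Longrightarrow> inv\<^bsub>G2\<^esub> c = inv\<^bsub>G1\<^esub> c"
  proof -
    fix c assume c: "c \<in> carrier G1"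
    have "inv\<^bsub>G1\<^esub> c \<otimes>\<^bsub>G2\<^esub> c = \<one>\<^bsub>G2\<^esub>"
      using mult_eq[OF G1.inv_closed[OF c] c] G1.l_inv[OF c] one_eq by simp
    then show "inv\<^bsub>G2\<^esub> c = inv\<^bsub>G1\<^esub> c"
      using G2.inv_equality[of "inv\<^bsub>G1\<^esub> c" c] sub c G1.inv_closed[OF c] by blast
  qed
  define cost where "cost a b c = q1 (a \<otimes>\<^bsub>G1\<^esub> inv\<^bsub>G1\<^esub> c) + q2 (b \<otimes>\<^bsub>G2\<^esub> c) + \<eta> c" for a b c
  have qA_eq: "\<And>a b. qA (a, b) = Min (cost a b ` carrier G1)"
    unfolding qA_def cost_def by simp
  have fin: "\<And>a b. finite (cost a b ` carrier G1)" using fin1 by simp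
  have ne: "\<And>a b. cost a b ` carrier G1 \<noteq> {}" using G1.one_closed by blast
  have qA_le: "\<And>a b c. c \<in> carrier G1 \<Longrightarrow> qA (a, b) \<le> cost a b c"
    unfolding qA_eq using fin by (intro Min_le) auto
  have qA_att: "\<And>a b. \<exists>c\<in>carrier G1. qA (a, b) = cost a b c"
    unfolding qA_eq using Min_in[OF fin ne] by blast
  have cG2: "\<And>c. c \<in> carrier G1 \<Longrightarrow> c \<in> carrier G2" using sub by blast
  have cost_nonneg: "\<And>a b c. a \<in> carrier G1 \<Longrightarrow> b \<in> carrier G2 \<Longrightarrow> c \<in> carrier G1 \<Longrightarrow> 0 \<le> cost a b c"
    unfolding cost_def using V1(1) V2(1) VE(1) G1.m_closed G1.inv_closed G2.m_closed cG2
    by (meson add_nonneg_nonneg)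
  have nonneg: "\<And>a b. a \<in> carrier G1 \<Longrightarrow> b \<in> carrier G2 \<Longrightarrow> 0 \<le> qA (a, b)"
    using qA_att cost_nonneg by metis
  show r1: "\<And>a. a \<in> carrier G1 \<Longrightarrow> qA (a, \<one>\<^bsub>G2\<^esub>) = q1 a"
  proof -
    fix a assume a: "a \<in> carrier G1"
    have "qA (a, \<one>\<^bsub>G2\<^esub>) \<le> cost a \<one>\<^bsub>G2\<^esub> \<one>\<^bsub>G1\<^esub>" by (rule qA_le[OF G1.one_closed])
    also have "\<dots> = q1 a"
    proof -
      have p1: "a \<otimes>\<^bsub>G1\<^esub> inv\<^bsub>G1\<^esub> \<one>\<^bsub>G1\<^esub> = a" using a by simp
      have p2: "\<one>\<^bsub>G2\<^esub> \<otimes>\<^bsub>G2\<^esub> \<one>\<^bsub>G1\<^esub> = \<one>\<^bsub>G2\<^esub>" by (simp add: one_eq)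
      have p3: "q2 \<one>\<^bsub>G2\<^esub> = 0" using V2(2)[OF G2.one_closed] by simp
      have p4: "\<eta> \<one>\<^bsub>G1\<^esub> = 0" using VE(2)[OF G1.one_closed] by simp
      show ?thesis unfolding cost_def p1 p2 p3 p4 by simp
    qed
    finally have le: "qA (a, \<one>\<^bsub>G2\<^esub>) \<le> q1 a" .
    obtain c where c: "c \<in> carrier G1" "qA (a, \<one>\<^bsub>G2\<^esub>) = cost a \<one>\<^bsub>G2\<^esub> c" using qA_att by blast
    have "q1 a = q1 ((a \<otimes>\<^bsub>G1\<^esub> inv\<^bsub>G1\<^esub> c) \<otimes>\<^bsub>G1\<^esub> c)"
      using a c(1) by (simp add: G1.m_assoc)
    also have "\<dots> \<le> q1 (a \<otimes>\<^bsub>G1\<^esub> inv\<^bsub>G1\<^esub> c) + q1 c"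
      using V1(4) a c(1) by simp
    also have "\<dots> \<le> q1 (a \<otimes>\<^bsub>G1\<^esub> inv\<^bsub>G1\<^esub> c) + q2 c + \<eta> c" using c1[OF c(1)] by simp
    also have "\<dots> = cost a \<one>\<^bsub>G2\<^esub> c" unfolding cost_def using cG2[OF c(1)] by simp
    finally show "qA (a, \<one>\<^bsub>G2\<^esub>) = q1 a" using le c(2) by simp
  qed
  show r2: "\<And>b. b \<in> carrier G2 \<Longrightarrow> qA (\<one>\<^bsub>G1\<^esub>, b) = q2 b"
  proof -
    fix b assume b: "b \<in> carrier G2"
    have "qA (\<one>\<^bsub>G1\<^esub>, b) \<le> cost \<one>\<^bsub>G1\<^esub> b \<one>\<^bsub>G1\<^esub>" by (rule qA_le[OF G1.one_closed])
    also have "\<dots> = q2 b"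
    proof -
      have p1: "\<one>\<^bsub>G1\<^esub> \<otimes>\<^bsub>G1\<^esub> inv\<^bsub>G1\<^esub> \<one>\<^bsub>G1\<^esub> = \<one>\<^bsub>G1\<^esub>" by simp
      have p2: "b \<otimes>\<^bsub>G2\<^esub> \<one>\<^bsub>G1\<^esub> = b" using b by (simp add: one_eq)
      have p3: "q1 \<one>\<^bsub>G1\<^esub> = 0" using V1(2)[OF G1.one_closed] by simp
      have p4: "\<eta> \<one>\<^bsub>G1\<^esub> = 0" using VE(2)[OF G1.one_closed] by simp
      show ?thesis unfolding cost_def p1 p2 p3 p4 by simp
    qed
    finally have le: "qA (\<one>\<^bsub>G1\<^esub>, b) \<le> q2 b" .
    obtain c where c: "c \<in> carrier G1" "qA (\<one>\<^bsub>G1\<^esub>, b) = cost \<one>\<^bsub>G1\<^esub> b c" using qA_att by blast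
    have c2': "c \<in> carrier G2" by (rule cG2[OF c(1)])
    have "q2 b = q2 ((b \<otimes>\<^bsub>G2\<^esub> c) \<otimes>\<^bsub>G2\<^esub> inv\<^bsub>G2\<^esub> c)"
      using b c2' by (simp add: G2.m_assoc)
    also have "\<dots> \<le> q2 (b \<otimes>\<^bsub>G2\<^esub> c) + q2 (inv\<^bsub>G2\<^esub> c)"
      using V2(4) b c2' by simp
    also have "\<dots> = q2 (b \<otimes>\<^bsub>G2\<^esub> c) + q2 c" using V2(3) c2' by simp
    also have "\<dots> \<le> q2 (b \<otimes>\<^bsub>G2\<^esub> c) + q1 c + \<eta> c" using c2[OF c(1)] by simp
    also have "\<dots> = cost \<one>\<^bsub>G1\<^esub> b c" unfolding cost_def using c(1) V1(3) by simp
    finally show "qA (\<one>\<^bsub>G1\<^esub>, b) = q2 b" using le c(2) by simp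
  qed
  show r3: "\<And>c. c \<in> carrier G1 \<Longrightarrow> qA (inv\<^bsub>G1\<^esub> c, c) \<le> \<eta> c"
  proof -
    fix c assume c: "c \<in> carrier G1"
    have "qA (inv\<^bsub>G1\<^esub> c, c) \<le> cost (inv\<^bsub>G1\<^esub> c) c (inv\<^bsub>G1\<^esub> c)" by (rule qA_le[OF G1.inv_closed[OF c]])
    also have "\<dots> = \<eta> c"
    proof -
      have "inv\<^bsub>G1\<^esub> c \<otimes>\<^bsub>G1\<^esub> inv\<^bsub>G1\<^esub> (inv\<^bsub>G1\<^esub> c) = \<one>\<^bsub>G1\<^esub>" using c by simp
      moreover have "c \<otimes>\<^bsub>G2\<^esub> inv\<^bsub>G1\<^esub> c = \<one>\<^bsub>G2\<^esub>"
        using mult_eq[OF c G1.inv_closed[OF c]] c one_eq by simp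
      moreover have "q1 \<one>\<^bsub>G1\<^esub> = 0" using V1(2)[OF G1.one_closed] by simp
      moreover have "q2 \<one>\<^bsub>G2\<^esub> = 0" using V2(2)[OF G2.one_closed] by simp
      ultimately show ?thesis unfolding cost_def using VE(3)[OF c] by simp
    qed
    finally show "qA (inv\<^bsub>G1\<^esub> c, c) \<le> \<eta> c" .
  qed
  show "is_value_on (G1 \<times>\<times> G2) qA"
    unfolding is_value_on_def
  proof (intro conjI ballI)
    fix x assume x: "x \<in> carrier (G1 \<times>\<times> G2)"
    obtain a b where ab: "x = (a, b)" "a \<in> carrier G1" "b \<in> carrier G2" using x by auto
    show "0 \<le> qA x" using nonneg ab by simp
    show "(qA x = 0) = (x = \<one>\<^bsub>G1 \<times>\<times> G2\<^esub>)"
    proof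
      assume "qA x = 0"
      then obtain c where c: "c \<in> carrier G1" "cost a b c = 0" using qA_att ab by metis
      have n1: "0 \<le> q1 (a \<otimes>\<^bsub>G1\<^esub> inv\<^bsub>G1\<^esub> c)" using V1(1) ab c by simp
      have n2: "0 \<le> q2 (b \<otimes>\<^bsub>G2\<^esub> c)" using V2(1) ab c cG2 by simp
      have n3: "0 \<le> \<eta> c" using VE(1) c by simp
      have z1: "q1 (a \<otimes>\<^bsub>G1\<^esub> inv\<^bsub>G1\<^esub> c) = 0" and z2: "q2 (b \<otimes>\<^bsub>G2\<^esub> c) = 0" and z3: "\<eta> c = 0"
        using c(2) n1 n2 n3 unfolding cost_def by linarith+
      have cc: "c = \<one>\<^bsub>G1\<^esub>" using VE(2)[OF c(1)] z3 by simp
      have "a = \<one>\<^bsub>G1\<^esub>" using V1(2) z1 ab cc by simp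
      moreover have "b = \<one>\<^bsub>G2\<^esub>" using V2(2) z2 ab cc one_eq by simp
      ultimately show "x = \<one>\<^bsub>G1 \<times>\<times> G2\<^esub>" using ab by simp
    next
      assume "x = \<one>\<^bsub>G1 \<times>\<times> G2\<^esub>"
      then have "x = (\<one>\<^bsub>G1\<^esub>, \<one>\<^bsub>G2\<^esub>)" by simp
      then show "qA x = 0" using r1[OF G1.one_closed] V1(2) by simp
    qed
    have symle: "\<And>a b. a \<in> carrier G1 \<Longrightarrow> b \<in> carrier G2 \<Longrightarrow> qA (inv\<^bsub>G1\<^esub> a, inv\<^bsub>G2\<^esub> b) \<le> qA (a, b)"
    proof -
      fix a b assume a: "a \<in> carrier G1" and b: "b \<in> carrier G2"
      obtain c where c: "c \<in> carrier G1" "qA (a, b) = cost a b c" using qA_att by blast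
      have c2': "c \<in> carrier G2" by (rule cG2[OF c(1)])
      have e1: "inv\<^bsub>G1\<^esub> a \<otimes>\<^bsub>G1\<^esub> inv\<^bsub>G1\<^esub> (inv\<^bsub>G1\<^esub> c) = inv\<^bsub>G1\<^esub> (a \<otimes>\<^bsub>G1\<^esub> inv\<^bsub>G1\<^esub> c)"
        using a c(1) by (simp add: G1.inv_mult G1.m_comm)
      have e2: "inv\<^bsub>G2\<^esub> b \<otimes>\<^bsub>G2\<^esub> inv\<^bsub>G1\<^esub> c = inv\<^bsub>G2\<^esub> (b \<otimes>\<^bsub>G2\<^esub> c)"
        using b c2' inv_eq[OF c(1)] by (simp add: G2.inv_mult)
      have "qA (inv\<^bsub>G1\<^esub> a, inv\<^bsub>G2\<^esub> b) \<le> cost (inv\<^bsub>G1\<^esub> a) (inv\<^bsub>G2\<^esub> b) (inv\<^bsub>G1\<^esub> c)"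
        by (rule qA_le[OF G1.inv_closed[OF c(1)]])
      also have "\<dots> = cost a b c"
        unfolding cost_def e1 e2 using V1(3) V2(3) VE(3) a b c(1) c2' by simp
      finally show "qA (inv\<^bsub>G1\<^esub> a, inv\<^bsub>G2\<^esub> b) \<le> qA (a, b)" using c(2) by simp
    qed
    have "inv\<^bsub>G1 \<times>\<times> G2\<^esub> x = (inv\<^bsub>G1\<^esub> a, inv\<^bsub>G2\<^esub> b)"
      using ab inv_DirProd[OF G1.is_group G2.is_group] by simp
    moreover have "qA (inv\<^bsub>G1\<^esub> a, inv\<^bsub>G2\<^esub> b) = qA (a, b)"
      using symle[OF ab(2,3)] symle[OF G1.inv_closed[OF ab(2)] G2.inv_closed[OF ab(3)]] ab by simp
    ultimately show "qA (inv\<^bsub>G1 \<times>\<times> G2\<^esub> x) = qA x" using ab by simp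
  next
    fix x y assume x: "x \<in> carrier (G1 \<times>\<times> G2)" and y: "y \<in> carrier (G1 \<times>\<times> G2)"
    obtain a b where ab: "x = (a, b)" "a \<in> carrier G1" "b \<in> carrier G2" using x by auto
    obtain a' b' where ab': "y = (a', b')" "a' \<in> carrier G1" "b' \<in> carrier G2" using y by auto
    obtain c where c: "c \<in> carrier G1" "qA (a, b) = cost a b c" using qA_att by blast
    obtain c' where c': "c' \<in> carrier G1" "qA (a', b') = cost a' b' c'" using qA_att by blast
    have cc2: "c \<in> carrier G2" "c' \<in> carrier G2" using cG2 c c' by auto
    have e1: "(a \<otimes>\<^bsub>G1\<^esub> a') \<otimes>\<^bsub>G1\<^esub> inv\<^bsub>G1\<^esub> (c \<otimes>\<^bsub>G1\<^esub> c') = (a \<otimes>\<^bsub>G1\<^esub> inv\<^bsub>G1\<^esub> c) \<otimes>\<^bsub>G1\<^esub> (a' \<otimes>\<^bsub>G1\<^esub> inv\<^bsub>G1\<^esub> c')"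
      using ab(2) ab'(2) c(1) c'(1) by (simp add: G1.inv_mult G1.m_ac)
    have e2: "(b \<otimes>\<^bsub>G2\<^esub> b') \<otimes>\<^bsub>G2\<^esub> (c \<otimes>\<^bsub>G1\<^esub> c') = (b \<otimes>\<^bsub>G2\<^esub> c) \<otimes>\<^bsub>G2\<^esub> (b' \<otimes>\<^bsub>G2\<^esub> c')"
      using ab(3) ab'(3) cc2 mult_eq[OF c(1) c'(1)] by (simp add: G2.m_ac)
    have "x \<otimes>\<^bsub>G1 \<times>\<times> G2\<^esub> y = (a \<otimes>\<^bsub>G1\<^esub> a', b \<otimes>\<^bsub>G2\<^esub> b')" using ab ab' by simp
    then have "qA (x \<otimes>\<^bsub>G1 \<times>\<times> G2\<^esub> y) \<le> cost (a \<otimes>\<^bsub>G1\<^esub> a') (b \<otimes>\<^bsub>G2\<^esub> b') (c \<otimes>\<^bsub>G1\<^esub> c')"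
      using qA_le[OF G1.m_closed[OF c(1) c'(1)]] by simp
    also have "\<dots> \<le> cost a b c + cost a' b' c'"
    proof -
      have "q1 ((a \<otimes>\<^bsub>G1\<^esub> inv\<^bsub>G1\<^esub> c) \<otimes>\<^bsub>G1\<^esub> (a' \<otimes>\<^bsub>G1\<^esub> inv\<^bsub>G1\<^esub> c')) \<le> q1 (a \<otimes>\<^bsub>G1\<^esub> inv\<^bsub>G1\<^esub> c) + q1 (a' \<otimes>\<^bsub>G1\<^esub> inv\<^bsub>G1\<^esub> c')"
        using V1(4) ab(2) ab'(2) c(1) c'(1) by simp
      moreover have "q2 ((b \<otimes>\<^bsub>G2\<^esub> c) \<otimes>\<^bsub>G2\<^esub> (b' \<otimes>\<^bsub>G2\<^esub> c')) \<le> q2 (b \<otimes>\<^bsub>G2\<^esub> c) + q2 (b' \<otimes>\<^bsub>G2\<^esub> c')"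
        using V2(4) ab(3) ab'(3) cc2 by simp
      moreover have "\<eta> (c \<otimes>\<^bsub>G1\<^esub> c') \<le> \<eta> c + \<eta> c'" using VE(4) c(1) c'(1) by simp
      ultimately show ?thesis unfolding cost_def e1 e2 by simp
    qed
    also have "\<dots> = qA x + qA y" using c c' ab ab' by simp
    finally show "qA (x \<otimes>\<^bsub>G1 \<times>\<times> G2\<^esub> y) \<le> qA x + qA y" .
  qed
qed



lemma hom_props:
  fixes f :: "'b \<Rightarrow> 'g::ab_group_add"
  assumes G: "group G" and h: "\<forall>x\<in>carrier G. \<forall>y\<in>carrier G. f (x \<otimes>\<^bsub>G\<^esub> y) = f x + f y"
  shows "f \<one>\<^bsub>G\<^esub> = 0" and "\<And>x. x \<in> carrier G \<Longrightarrow> f (inv\<^bsub>G\<^esub> x) = - f x"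
proof -
  interpret G: group G by (rule G)
  have "f \<one>\<^bsub>G\<^esub> = f (\<one>\<^bsub>G\<^esub> \<otimes>\<^bsub>G\<^esub> \<one>\<^bsub>G\<^esub>)" by simp
  also have "\<dots> = f \<one>\<^bsub>G\<^esub> + f \<one>\<^bsub>G\<^esub>" using h G.one_closed by blast
  finally show one: "f \<one>\<^bsub>G\<^esub> = 0" by simp
  fix x assume x: "x \<in> carrier G"
  have "0 = f (x \<otimes>\<^bsub>G\<^esub> inv\<^bsub>G\<^esub> x)" using one x by simp
  also have "\<dots> = f x + f (inv\<^bsub>G\<^esub> x)" using h x G.inv_closed by blast
  finally show "f (inv\<^bsub>G\<^esub> x) = - f x" by (simp add: eq_neg_iff_add_eq_0 add.commute)
qed

lemma is_value_props:
  assumes "is_value p"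
  shows "\<And>x. p x \<ge> 0" "\<And>x. p x = 0 \<longleftrightarrow> x = 0" "\<And>x. p (- x) = p x" "\<And>x y. p (x + y) \<le> p x + p y"
  using assms unfolding is_value_def by blast+

context QS begin

lemma Qr_pvalue: "is_pvalue_on (ZP m n) Qr"
  unfolding is_pvalue_on_def
proof (intro conjI ballI)
  fix x y assume x: "x \<in> carrier (ZP m n)" and y: "y \<in> carrier (ZP m n)"
  show "Qr (x \<otimes>\<^bsub>ZP m n\<^esub> y) \<le> Qr x + Qr y" by (rule Qr_mult[OF x y])
next
  fix x assume x: "x \<in> carrier (ZP m n)"
  show "0 \<le> Qr x" by (rule Qr_nonneg[OF x])
  show "Qr (inv\<^bsub>ZP m n\<^esub> x) = Qr x" by (rule Qr_inv[OF x])
next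
  show "Qr \<one>\<^bsub>ZP m n\<^esub> = 0" using Qr_one by simp
qed

definition ind :: "(nat \<Rightarrow> int) \<Rightarrow> real" where "ind c = (if c = (\<lambda>a. 0) then 0 else 1)"

lemma ind_pvalue: "is_pvalue_on (ZP m n) ind"
  unfolding is_pvalue_on_def
proof (intro conjI ballI)
  fix x y assume x: "x \<in> carrier (ZP m n)" and y: "y \<in> carrier (ZP m n)"
  show "ind (x \<otimes>\<^bsub>ZP m n\<^esub> y) \<le> ind x + ind y"
  proof (cases "x = (\<lambda>a. 0) \<and> y = (\<lambda>a. 0)")
    case True then show ?thesis by (simp add: ind_def)
  next
    case False then show ?thesis by (auto simp: ind_def)
  qed
qed (auto simp: ind_def ZP_inv_one)

lemma qv_alt: "qv \<delta> c = (1 - \<delta>) * Qr c + \<delta> * ind c"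
  by (simp add: qv_def ind_def)

lemma ind_nonneg: "0 \<le> ind c" by (simp add: ind_def)
lemma ind_le1: "ind c \<le> 1" by (simp add: ind_def)

end

locale Main = QS m v B D r for m v B D r +
  fixes N :: nat and p :: "'g::ab_group_add \<Rightarrow> real"
  assumes G2: "G2_property r N p"
    and rr: "r = 1 \<or> r = \<infinity>"
    and mN: "N \<noteq> 0 \<Longrightarrow> m = N"
    and pval: "is_value p"
    and pr: "\<And>x. ereal (p x) \<le> r"
begin

definition e :: "nat \<Rightarrow> real" where "e n = (1/2) ^ (n + 2)"

lemma e_pos: "0 < e n" by (simp add: e_def)
lemma e_le: "e n \<le> 1/4"
proof -
  have "(1/2::real) ^ (n + 2) \<le> (1/2) ^ 2" by (rule power_decreasing) auto
  then show ?thesis by (simp add: e_def power2_eq_square)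
qed
lemma e_Suc: "e (Suc n) = e n / 2" by (simp add: e_def)
lemma e_lt1: "e n < 1" using e_le[of n] by simp

abbreviation q :: "nat \<Rightarrow> (nat \<Rightarrow> int) \<Rightarrow> real" where "q n \<equiv> qv (e n)"

definition Pn :: "nat \<Rightarrow> ((nat \<Rightarrow> int) \<Rightarrow> 'g) \<Rightarrow> bool" where
  "Pn n \<psi> \<longleftrightarrow> (\<forall>x\<in>carrier (ZP m n). \<forall>y\<in>carrier (ZP m n). \<psi> (x \<otimes>\<^bsub>ZP m n\<^esub> y) = \<psi> x + \<psi> y) \<and>
     (\<forall>x\<in>carrier (ZP m n). (1 - e n) * q n x \<le> p (\<psi> x) \<and> p (\<psi> x) \<le> (1 + e n) * q n x)"

lemma ZP_expN: "N \<noteq> 0 \<longrightarrow> (\<forall>x\<in>carrier (ZP m n). x [^]\<^bsub>ZP m n\<^esub> N = \<one>\<^bsub>ZP m n\<^esub>)"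
  using ZP_exp[OF m1] mN by auto

lemma q_value: "is_value_on (ZP m n) (q k)"
  using qv_value[OF e_pos] e_le[of k] by simp

lemma q_le_r: "ereal (q k c) \<le> r"
  using qv_le_r[OF rr e_pos] e_le[of k] by simp

lemma stage0: "\<exists>\<psi>. Pn 0 \<psi>"
proof -
  interpret Z: group "ZP m 0" by (rule ZPg)
  have "\<exists>\<psi>. (\<forall>x\<in>carrier (ZP m 0). \<forall>y\<in>carrier (ZP m 0). \<psi> (x \<otimes>\<^bsub>ZP m 0\<^esub> y) = \<psi> x + \<psi> y) \<and>
             (\<forall>x\<in>{\<one>\<^bsub>ZP m 0\<^esub>}. p ((\<lambda>_. 0) x - \<psi> x) \<le> e 0) \<and>
             (\<forall>x\<in>carrier (ZP m 0). (1 - e 0) * q 0 x \<le> p (\<psi> x) \<and> p (\<psi> x) \<le> (1 + e 0) * q 0 x)"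
  proof (rule G2_gen[OF G2 ZPc ZP_finite ZP_expN q_value])
    show "\<forall>x\<in>carrier (ZP m 0). ereal (q 0 x) \<le> r" using q_le_r by blast
    show "subgroup {\<one>\<^bsub>ZP m 0\<^esub>} (ZP m 0)" by (rule Z.triv_subgroup)
    show "\<forall>x\<in>{\<one>\<^bsub>ZP m 0\<^esub>}. \<forall>y\<in>{\<one>\<^bsub>ZP m 0\<^esub>}. (0::'g) = 0 + 0" by simp
    have "q 0 \<one>\<^bsub>ZP m 0\<^esub> = 0" using q_value[of 0 0] Z.one_closed unfolding is_value_on_def by blast
    then show "\<forall>x\<in>{\<one>\<^bsub>ZP m 0\<^esub>}. p 0 = q 0 x" using is_value_props(2)[OF pval] by simp
    show "0 < e 0" "e 0 < 1" using e_pos e_lt1 by auto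
  qed
  then show ?thesis unfolding Pn_def by blast
qed

end



lemma glue_ex:
  fixes G1 :: "'b monoid" and G2 :: "'b monoid"
  assumes "comm_group G1" "comm_group G2" "finite (carrier G1)"
    "carrier G1 \<subseteq> carrier G2"
    "\<And>x y. x \<in> carrier G1 \<Longrightarrow> y \<in> carrier G1 \<Longrightarrow> x \<otimes>\<^bsub>G1\<^esub> y = x \<otimes>\<^bsub>G2\<^esub> y"
    "\<one>\<^bsub>G1\<^esub> = \<one>\<^bsub>G2\<^esub>"
    "is_value_on G1 q1" "is_value_on G2 q2" "is_value_on G1 \<eta>"
    "\<And>c. c \<in> carrier G1 \<Longrightarrow> q1 c \<le> q2 c + \<eta> c"
    "\<And>c. c \<in> carrier G1 \<Longrightarrow> q2 c \<le> q1 c + \<eta> c"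
  shows "\<exists>qA. is_value_on (G1 \<times>\<times> G2) qA \<and> (\<forall>a\<in>carrier G1. qA (a, \<one>\<^bsub>G2\<^esub>) = q1 a) \<and>
     (\<forall>b\<in>carrier G2. qA (\<one>\<^bsub>G1\<^esub>, b) = q2 b) \<and> (\<forall>c\<in>carrier G1. qA (inv\<^bsub>G1\<^esub> c, c) \<le> \<eta> c)"
  using glue[OF assms] by blast

lemma p_diff_le:
  assumes "is_value p"
  shows "p (x - y) \<le> p x + p y"
  using is_value_props[OF assms] by (metis diff_conv_add_uminus)

context Main begin

lemma step:
  assumes P: "Pn n \<psi>"
  shows "\<exists>\<psi>'. Pn (Suc n) \<psi>' \<and>
           (\<forall>c\<in>carrier (ZP m n). p (\<psi>' c - \<psi> c) \<le> 2 * e n * (q n c + 1 + Qr c) + e (Suc n))"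
proof -
  interpret G1: comm_group "ZP m n" by (rule ZPc)
  interpret G2: comm_group "ZP m (Suc n)" by (rule ZPc)
  have hom: "\<forall>x\<in>carrier (ZP m n). \<forall>y\<in>carrier (ZP m n). \<psi> (x \<otimes>\<^bsub>ZP m n\<^esub> y) = \<psi> x + \<psi> y"
    using P unfolding Pn_def by blast
  have bnd: "\<And>x. x \<in> carrier (ZP m n) \<Longrightarrow> (1 - e n) * q n x \<le> p (\<psi> x) \<and> p (\<psi> x) \<le> (1 + e n) * q n x"
    using P unfolding Pn_def by blast
  have pv: "\<And>x. p x \<ge> 0" "\<And>x. p x = 0 \<longleftrightarrow> x = 0" "\<And>x. p (- x) = p x" "\<And>x y. p (x + y) \<le> p x + p y"
    using is_value_props[OF pval] by blast+
  have qnv: "\<And>x. x \<in> carrier (ZP m n) \<Longrightarrow> 0 \<le> q n x" "\<And>x. x \<in> carrier (ZP m n) \<Longrightarrow> q n x = 0 \<longleftrightarrow> x = \<one>\<^bsub>ZP m n\<^esub>"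
    using q_value[of n n] unfolding is_value_on_def by blast+
  define q1 where "q1 = (\<lambda>c. p (\<psi> c))"
  define \<eta> where "\<eta> = (\<lambda>c. e n * q n c + e n * (ind c + Qr c))"
  have v1: "is_value_on (ZP m n) q1"
    unfolding is_value_on_def q1_def
  proof (intro conjI ballI)
    fix x assume x: "x \<in> carrier (ZP m n)"
    show "0 \<le> p (\<psi> x)" by (rule pv(1))
    show "(p (\<psi> x) = 0) = (x = \<one>\<^bsub>ZP m n\<^esub>)"
    proof
      assume "p (\<psi> x) = 0"
      then have "(1 - e n) * q n x \<le> 0" using bnd[OF x] by simp
      then have "q n x \<le> 0" using e_lt1[of n] by (simp add: mult_le_0_iff)
      then show "x = \<one>\<^bsub>ZP m n\<^esub>" using qnv[OF x] by simp
    next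
      assume "x = \<one>\<^bsub>ZP m n\<^esub>"
      then show "p (\<psi> x) = 0" using hom_props(1)[OF G1.is_group hom] pv(2) by simp
    qed
    show "p (\<psi> (inv\<^bsub>ZP m n\<^esub> x)) = p (\<psi> x)" using hom_props(2)[OF G1.is_group hom x] pv(3) by simp
  next
    fix x y assume x: "x \<in> carrier (ZP m n)" and y: "y \<in> carrier (ZP m n)"
    show "p (\<psi> (x \<otimes>\<^bsub>ZP m n\<^esub> y)) \<le> p (\<psi> x) + p (\<psi> y)" using hom x y pv(4) by simp
  qed
  have ve: "is_value_on (ZP m n) \<eta>"
    unfolding \<eta>_def
    by (rule value_add_pvalue[OF value_scale[OF q_value e_pos]
          pvalue_scale[OF pvalue_add[OF ind_pvalue Qr_pvalue] less_imp_le[OF e_pos]] ZPg])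
  have compat: "q1 c \<le> q (Suc n) c + \<eta> c \<and> q (Suc n) c \<le> q1 c + \<eta> c" if c: "c \<in> carrier (ZP m n)" for c
  proof -
    have qn: "q n c = Qr c - e n * Qr c + e n * ind c" by (simp add: qv_alt algebra_simps)
    have qs: "q (Suc n) c = Qr c - e n / 2 * Qr c + e n / 2 * ind c" by (simp add: qv_alt e_Suc algebra_simps)
    have en: "0 \<le> e n" using e_pos[of n] by simp
    have f1: "0 \<le> e n * Qr c" by (rule mult_nonneg_nonneg[OF en Qr_nonneg[OF c]])
    have f2: "0 \<le> e n * ind c" by (rule mult_nonneg_nonneg[OF en ind_nonneg])
    have f3: "0 \<le> e n * q n c" by (rule mult_nonneg_nonneg[OF en qnv(1)[OF c]])
    have b1: "q n c - e n * q n c \<le> q1 c" using bnd[OF c] unfolding q1_def by (simp add: algebra_simps)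
    have b2: "q1 c \<le> q n c + e n * q n c" using bnd[OF c] unfolding q1_def by (simp add: algebra_simps)
    have et: "\<eta> c = e n * q n c + e n * ind c + e n * Qr c" unfolding \<eta>_def by (simp add: algebra_simps)
    show ?thesis using qn qs f1 f2 f3 b1 b2 et by linarith
  qed
  obtain qA where qA: "is_value_on (ZP m n \<times>\<times> ZP m (Suc n)) qA"
      "\<forall>a\<in>carrier (ZP m n). qA (a, \<one>\<^bsub>ZP m (Suc n)\<^esub>) = q1 a"
      "\<forall>b\<in>carrier (ZP m (Suc n)). qA (\<one>\<^bsub>ZP m n\<^esub>, b) = q (Suc n) b"
      "\<forall>c\<in>carrier (ZP m n). qA (inv\<^bsub>ZP m n\<^esub> c, c) \<le> \<eta> c"
  proof -
    have "\<exists>qA. is_value_on (ZP m n \<times>\<times> ZP m (Suc n)) qA \<and>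
      (\<forall>a\<in>carrier (ZP m n). qA (a, \<one>\<^bsub>ZP m (Suc n)\<^esub>) = q1 a) \<and>
      (\<forall>b\<in>carrier (ZP m (Suc n)). qA (\<one>\<^bsub>ZP m n\<^esub>, b) = q (Suc n) b) \<and>
      (\<forall>c\<in>carrier (ZP m n). qA (inv\<^bsub>ZP m n\<^esub> c, c) \<le> \<eta> c)"
    proof (rule glue_ex[OF ZPc ZPc ZP_finite ZP_mono[of n "Suc n"] _ _ v1 q_value[where n="Suc n" and k="Suc n"] ve])
      show "\<And>x y. x \<in> carrier (ZP m n) \<Longrightarrow> y \<in> carrier (ZP m n) \<Longrightarrow> x \<otimes>\<^bsub>ZP m n\<^esub> y = x \<otimes>\<^bsub>ZP m (Suc n)\<^esub> y"
        by simp
      show "\<one>\<^bsub>ZP m n\<^esub> = \<one>\<^bsub>ZP m (Suc n)\<^esub>" by simp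
      show "n \<le> Suc n" by simp
      show "\<And>c. c \<in> carrier (ZP m n) \<Longrightarrow> q1 c \<le> q (Suc n) c + \<eta> c" using compat by blast
      show "\<And>c. c \<in> carrier (ZP m n) \<Longrightarrow> q (Suc n) c \<le> q1 c + \<eta> c" using compat by blast
    qed
    then show ?thesis using that by blast
  qed
  define A where "A = ZP m n \<times>\<times> ZP m (Suc n)"
  define qT where "qT = (\<lambda>x. if r = 1 then min 1 (qA x) else qA x)"
  have cgA: "comm_group A" unfolding A_def by (rule DirProd_comm_group[OF ZPc ZPc])
  interpret A: comm_group A by (rule cgA)
  have finA: "finite (carrier A)" unfolding A_def using ZP_finite by simp
  have vT: "is_value_on A qT"
  proof (cases "r = 1")
    case True then show ?thesis unfolding qT_def A_def using value_min1[OF qA(1)] by simp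
  next
    case False then show ?thesis unfolding qT_def A_def using qA(1) by simp
  qed
  have qT_le: "\<And>x. qT x \<le> qA x" unfolding qT_def by simp
  have bT: "\<forall>x\<in>carrier A. ereal (qT x) \<le> r"
  proof
    fix x assume "x \<in> carrier A"
    show "ereal (qT x) \<le> r"
    proof (cases "r = 1")
      case True then show ?thesis unfolding qT_def by (simp add: one_ereal_def)
    next
      case False then have "r = \<infinity>" using rr by simp
      then show ?thesis by simp
    qed
  qed
  have expA: "N \<noteq> 0 \<longrightarrow> (\<forall>x\<in>carrier A. x [^]\<^bsub>A\<^esub> N = \<one>\<^bsub>A\<^esub>)"
  proof (intro impI ballI)
    fix x assume N: "N \<noteq> 0" and x: "x \<in> carrier A"
    obtain a b where ab: "x = (a, b)" "a \<in> carrier (ZP m n)" "b \<in> carrier (ZP m (Suc n))"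
      using x unfolding A_def by auto
    have "x [^]\<^bsub>A\<^esub> N = (a [^]\<^bsub>ZP m n\<^esub> N, b [^]\<^bsub>ZP m (Suc n)\<^esub> N)"
      unfolding A_def ab(1) by (rule DirProd_pow[OF G1.is_monoid G2.is_monoid ab(2,3)])
    also have "\<dots> = \<one>\<^bsub>A\<^esub>" unfolding A_def using ZP_expN N ab by simp
    finally show "x [^]\<^bsub>A\<^esub> N = \<one>\<^bsub>A\<^esub>" .
  qed
  define K where "K = carrier (ZP m n) \<times> {\<one>\<^bsub>ZP m (Suc n)\<^esub>}"
  have subK: "subgroup K A"
    unfolding K_def A_def by (rule DirProd_subgroups[OF G1.is_group G1.subgroup_self G2.is_group G2.triv_subgroup])
  have phom: "\<forall>x\<in>K. \<forall>y\<in>K. \<psi> (fst (x \<otimes>\<^bsub>A\<^esub> y)) = \<psi> (fst x) + \<psi> (fst y)"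
  proof (intro ballI)
    fix x y assume "x \<in> K" "y \<in> K"
    then obtain a a' where aa: "x = (a, \<one>\<^bsub>ZP m (Suc n)\<^esub>)" "y = (a', \<one>\<^bsub>ZP m (Suc n)\<^esub>)"
      "a \<in> carrier (ZP m n)" "a' \<in> carrier (ZP m n)" unfolding K_def by auto
    have "fst (x \<otimes>\<^bsub>A\<^esub> y) = a \<otimes>\<^bsub>ZP m n\<^esub> a'" unfolding A_def aa(1,2) mult_DirProd by simp
    then show "\<psi> (fst (x \<otimes>\<^bsub>A\<^esub> y)) = \<psi> (fst x) + \<psi> (fst y)" using hom aa by simp
  qed
  have piso: "\<forall>x\<in>K. p (\<psi> (fst x)) = qT x"
  proof
    fix x assume "x \<in> K"
    then obtain a where a: "x = (a, \<one>\<^bsub>ZP m (Suc n)\<^esub>)" "a \<in> carrier (ZP m n)" unfolding K_def by auto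
    have "qA x = p (\<psi> a)" using qA(2) a unfolding q1_def by simp
    moreover have "r = 1 \<Longrightarrow> p (\<psi> a) \<le> 1" using pr[of "\<psi> a"] by (simp add: one_ereal_def)
    ultimately show "p (\<psi> (fst x)) = qT x" unfolding qT_def using a by auto
  qed
  obtain ch where chi: "\<forall>x\<in>carrier A. \<forall>y\<in>carrier A. ch (x \<otimes>\<^bsub>A\<^esub> y) = ch x + ch y"
      "\<forall>x\<in>K. p (\<psi> (fst x) - ch x) \<le> e (Suc n)"
      "\<forall>x\<in>carrier A. (1 - e (Suc n)) * qT x \<le> p (ch x) \<and> p (ch x) \<le> (1 + e (Suc n)) * qT x"
    using G2_gen[OF G2 cgA finA expA vT bT subK phom piso e_pos e_lt1] by blast
  define \<psi>' where "\<psi>' = (\<lambda>b. ch (\<one>\<^bsub>ZP m n\<^esub>, b))"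
  have P': "Pn (Suc n) \<psi>'"
    unfolding Pn_def
  proof (intro conjI ballI)
    fix x y assume x: "x \<in> carrier (ZP m (Suc n))" and y: "y \<in> carrier (ZP m (Suc n))"
    have "(\<one>\<^bsub>ZP m n\<^esub>, x \<otimes>\<^bsub>ZP m (Suc n)\<^esub> y) = (\<one>\<^bsub>ZP m n\<^esub>, x) \<otimes>\<^bsub>A\<^esub> (\<one>\<^bsub>ZP m n\<^esub>, y)"
      unfolding A_def mult_DirProd by simp
    moreover have "(\<one>\<^bsub>ZP m n\<^esub>, x) \<in> carrier A" "(\<one>\<^bsub>ZP m n\<^esub>, y) \<in> carrier A"
      unfolding A_def using x y by auto
    ultimately show "\<psi>' (x \<otimes>\<^bsub>ZP m (Suc n)\<^esub> y) = \<psi>' x + \<psi>' y"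
      unfolding \<psi>'_def using chi(1) by simp
  next
    fix x assume x: "x \<in> carrier (ZP m (Suc n))"
    have xA: "(\<one>\<^bsub>ZP m n\<^esub>, x) \<in> carrier A" unfolding A_def using x by auto
    have "qA (\<one>\<^bsub>ZP m n\<^esub>, x) = q (Suc n) x" using qA(3) x by simp
    moreover have "r = 1 \<Longrightarrow> q (Suc n) x \<le> 1" using q_le_r[of "Suc n" x] by (simp add: one_ereal_def)
    ultimately have "qT (\<one>\<^bsub>ZP m n\<^esub>, x) = q (Suc n) x" unfolding qT_def by auto
    then show "(1 - e (Suc n)) * q (Suc n) x \<le> p (\<psi>' x)" "p (\<psi>' x) \<le> (1 + e (Suc n)) * q (Suc n) x"
      using chi(3) xA unfolding \<psi>'_def by auto
  qed
  have move: "p (\<psi>' c - \<psi> c) \<le> 2 * e n * (q n c + 1 + Qr c) + e (Suc n)" if c: "c \<in> carrier (ZP m n)" for c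
  proof -
    have c2: "c \<in> carrier (ZP m (Suc n))" using ZP_mono[of n "Suc n"] c by auto
    have ic: "inv\<^bsub>ZP m n\<^esub> c \<in> carrier (ZP m n)" by (rule G1.inv_closed[OF c])
    have m1A: "(\<one>\<^bsub>ZP m n\<^esub>, c) \<in> carrier A" "(inv\<^bsub>ZP m n\<^esub> c, \<one>\<^bsub>ZP m (Suc n)\<^esub>) \<in> carrier A"
      "(c, \<one>\<^bsub>ZP m (Suc n)\<^esub>) \<in> carrier A" "(inv\<^bsub>ZP m n\<^esub> c, c) \<in> carrier A"
      unfolding A_def using c c2 ic by auto
    have e1: "(inv\<^bsub>ZP m n\<^esub> c, c) = (\<one>\<^bsub>ZP m n\<^esub>, c) \<otimes>\<^bsub>A\<^esub> (inv\<^bsub>ZP m n\<^esub> c, \<one>\<^bsub>ZP m (Suc n)\<^esub>)"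
      unfolding A_def mult_DirProd using c2 ic by simp
    have e2: "inv\<^bsub>A\<^esub> (c, \<one>\<^bsub>ZP m (Suc n)\<^esub>) = (inv\<^bsub>ZP m n\<^esub> c, \<one>\<^bsub>ZP m (Suc n)\<^esub>)"
      unfolding A_def using inv_DirProd[OF G1.is_group G2.is_group c G2.one_closed] G2.inv_one by simp
    have "ch (inv\<^bsub>ZP m n\<^esub> c, c) = \<psi>' c + ch (inv\<^bsub>ZP m n\<^esub> c, \<one>\<^bsub>ZP m (Suc n)\<^esub>)"
      unfolding \<psi>'_def e1 using chi(1) m1A by simp
    moreover have "ch (inv\<^bsub>ZP m n\<^esub> c, \<one>\<^bsub>ZP m (Suc n)\<^esub>) = - ch (c, \<one>\<^bsub>ZP m (Suc n)\<^esub>)"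
      using hom_props(2)[OF A.is_group chi(1) m1A(3)] e2 by simp
    ultimately have eq: "\<psi>' c - \<psi> c = ch (inv\<^bsub>ZP m n\<^esub> c, c) - (\<psi> c - ch (c, \<one>\<^bsub>ZP m (Suc n)\<^esub>))"
      by (simp add: algebra_simps)
    have t1: "p (ch (inv\<^bsub>ZP m n\<^esub> c, c)) \<le> 2 * \<eta> c"
    proof -
      have "p (ch (inv\<^bsub>ZP m n\<^esub> c, c)) \<le> (1 + e (Suc n)) * qT (inv\<^bsub>ZP m n\<^esub> c, c)"
        using chi(3) m1A(4) by blast
      also have "\<dots> \<le> (1 + e (Suc n)) * \<eta> c"
        using qT_le[of "(inv\<^bsub>ZP m n\<^esub> c, c)"] qA(4) c e_pos[of "Suc n"]
        by (meson mult_left_mono order_trans less_imp_le add_nonneg_nonneg zero_le_one)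
      also have "\<dots> \<le> 2 * \<eta> c"
      proof -
        have "0 \<le> \<eta> c" using ve c unfolding is_value_on_def by blast
        then show ?thesis using e_le[of "Suc n"] by (intro mult_right_mono) auto
      qed
      finally show ?thesis .
    qed
    have t2: "p (\<psi> c - ch (c, \<one>\<^bsub>ZP m (Suc n)\<^esub>)) \<le> e (Suc n)"
      using chi(2) c unfolding K_def by fastforce
    have t3: "\<eta> c \<le> e n * (q n c + 1 + Qr c)"
      unfolding \<eta>_def using ind_le1[of c] e_pos[of n] by (simp add: algebra_simps)
    have "p (\<psi>' c - \<psi> c) \<le> p (ch (inv\<^bsub>ZP m n\<^esub> c, c)) + p (\<psi> c - ch (c, \<one>\<^bsub>ZP m (Suc n)\<^esub>))"
      unfolding eq by (rule p_diff_le[OF pval])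
    then show ?thesis using t1 t2 t3 by linarith
  qed
  show ?thesis using P' move by blast
qed

end



lemma p_tri:
  assumes "is_value p"
  shows "p (a - c) \<le> p (a - b) + p (b - c)"
proof -
  have "a - c = (a - b) + (b - c)" by simp
  then show ?thesis using is_value_props(4)[OF assms, of "a - b" "b - c"] by simp
qed

lemma p_sym:
  assumes "is_value p"
  shows "p (a - b) = p (b - a)"
  using is_value_props(3)[OF assms, of "a - b"] by simp

lemma geo_bound:
  fixes s :: "nat \<Rightarrow> 'g::ab_group_add"
  assumes pv: "is_value p" and C: "0 \<le> C" and h: "\<And>k. p (s (Suc k) - s k) \<le> C * (1/2)^k"
  shows "k \<le> l \<Longrightarrow> p (s l - s k) \<le> 2 * C * ((1/2)^k - (1/2)^l)"
proof (induction l)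
  have p0: "p 0 = 0" using is_value_props(2)[OF pv] by simp
  case 0
  then show ?case using p0 by simp
next
  case (Suc l)
  show ?case
  proof (cases "k = Suc l")
    have p0: "p 0 = 0" using is_value_props(2)[OF pv] by simp
    case True then show ?thesis using p0 by simp
  next
    case False
    then have kl: "k \<le> l" using Suc.prems by simp
    have "p (s (Suc l) - s k) \<le> p (s (Suc l) - s l) + p (s l - s k)" by (rule p_tri[OF pv])
    also have "\<dots> \<le> C * (1/2)^l + 2 * C * ((1/2)^k - (1/2)^l)" using h[of l] Suc.IH[OF kl] by simp
    also have "\<dots> = 2 * C * ((1/2)^k - (1/2)^(Suc l))" by (simp add: algebra_simps)
    finally show ?thesis .
  qed
qed

lemma geo_cauchy:
  fixes s :: "nat \<Rightarrow> 'g::ab_group_add"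
  assumes pv: "is_value p" and C: "0 \<le> C" and h: "\<And>k. p (s (Suc k) - s k) \<le> C * (1/2)^k"
  shows "\<forall>\<epsilon>>0. \<exists>K. \<forall>k\<ge>K. \<forall>l\<ge>K. p (s k - s l) < \<epsilon>"
proof (intro allI impI)
  fix \<epsilon> :: real assume \<epsilon>: "\<epsilon> > 0"
  have "\<epsilon> / (2 * C + 1) > 0" using \<epsilon> C by simp
  then obtain K where K: "(1/2::real)^K < \<epsilon> / (2 * C + 1)" using real_arch_pow_inv[of "\<epsilon> / (2 * C + 1)" "1/2"] by auto
  have main: "p (s l - s k) < \<epsilon>" if "K \<le> k" "k \<le> l" for k l
  proof -
    have "p (s l - s k) \<le> 2 * C * ((1/2)^k - (1/2)^l)" by (rule geo_bound[OF pv C h that(2)])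
    also have "\<dots> \<le> 2 * C * (1/2)^k" using C by (simp add: mult_left_mono)
    also have "\<dots> \<le> 2 * C * (1/2)^K" using C that(1) by (intro mult_left_mono power_decreasing) auto
    also have "\<dots> \<le> (2 * C + 1) * (1/2)^K" by simp
    also have "\<dots> < (2 * C + 1) * (\<epsilon> / (2 * C + 1))" using K C by (intro mult_strict_left_mono) auto
    also have "\<dots> = \<epsilon>" using C by simp
    finally show ?thesis .
  qed
  show "\<exists>K. \<forall>k\<ge>K. \<forall>l\<ge>K. p (s k - s l) < \<epsilon>"
  proof (intro exI allI impI)
    fix k l assume "K \<le> k" "K \<le> l"
    show "p (s k - s l) < \<epsilon>"
    proof (cases "k \<le> l")
      case True then show ?thesis using main[of k l] \<open>K \<le> k\<close> p_sym[OF pv, of "s k" "s l"] by simp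
    next
      case False then show ?thesis using main[of l k] \<open>K \<le> l\<close> by simp
    qed
  qed
qed

lemma iso_limit:
  assumes pv: "is_value p"
    and h: "\<And>\<epsilon>. \<epsilon> > 0 \<Longrightarrow> \<exists>u w. p (UU - u) < \<epsilon> \<and> p (WW - w) < \<epsilon> \<and> \<bar>p (u - w) - XX\<bar> < \<epsilon>"
  shows "p (UU - WW) = XX"
proof (rule ccontr)
  assume ne: "p (UU - WW) \<noteq> XX"
  define \<delta> where "\<delta> = \<bar>p (UU - WW) - XX\<bar> / 3"
  have \<delta>: "\<delta> > 0" using ne unfolding \<delta>_def by simp
  obtain u w where uw: "p (UU - u) < \<delta>" "p (WW - w) < \<delta>" "\<bar>p (u - w) - XX\<bar> < \<delta>" using h[OF \<delta>] by blast
  have t1: "p (UU - WW) \<le> p (UU - u) + p (u - WW)" by (rule p_tri[OF pv])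
  have t2: "p (u - WW) \<le> p (u - w) + p (w - WW)" by (rule p_tri[OF pv])
  have t3: "p (u - w) \<le> p (u - UU) + p (UU - w)" by (rule p_tri[OF pv])
  have t4: "p (UU - w) \<le> p (UU - WW) + p (WW - w)" by (rule p_tri[OF pv])
  have s1: "p (w - WW) = p (WW - w)" by (rule p_sym[OF pv])
  have s2: "p (u - UU) = p (UU - u)" by (rule p_sym[OF pv])
  have "\<bar>p (UU - WW) - XX\<bar> < 3 * \<delta>" using t1 t2 t3 t4 s1 s2 uw by linarith
  then show False unfolding \<delta>_def by simp
qed

context Main begin

definition Psi :: "nat \<Rightarrow> (nat \<Rightarrow> int) \<Rightarrow> 'g" where
  "Psi = rec_nat (SOME \<psi>. Pn 0 \<psi>)
     (\<lambda>n \<psi>. SOME \<psi>'. Pn (Suc n) \<psi>' \<and>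
        (\<forall>c\<in>carrier (ZP m n). p (\<psi>' c - \<psi> c) \<le> 2 * e n * (q n c + 1 + Qr c) + e (Suc n)))"

lemma Psi_P: "Pn n (Psi n)"
proof (induction n)
  case 0
  show ?case unfolding Psi_def using someI_ex[OF stage0] by simp
next
  case (Suc n)
  have "Psi (Suc n) = (SOME \<psi>'. Pn (Suc n) \<psi>' \<and>
        (\<forall>c\<in>carrier (ZP m n). p (\<psi>' c - Psi n c) \<le> 2 * e n * (q n c + 1 + Qr c) + e (Suc n)))"
    unfolding Psi_def by simp
  then show ?case using someI_ex[OF step[OF Suc.IH]] by simp
qed

lemma Psi_move: "c \<in> carrier (ZP m n) \<Longrightarrow> p (Psi (Suc n) c - Psi n c) \<le> 2 * e n * (q n c + 1 + Qr c) + e (Suc n)"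
proof -
  assume c: "c \<in> carrier (ZP m n)"
  have "Psi (Suc n) = (SOME \<psi>'. Pn (Suc n) \<psi>' \<and>
        (\<forall>c\<in>carrier (ZP m n). p (\<psi>' c - Psi n c) \<le> 2 * e n * (q n c + 1 + Qr c) + e (Suc n)))"
    unfolding Psi_def by simp
  then show ?thesis using someI_ex[OF step[OF Psi_P[of n]]] c by simp
qed

definition Ca :: "nat \<Rightarrow> real" where "Ca a = 4 * (2 * (\<Sum>b\<le>a. B b)) + 5"

lemma B_nonneg: "0 \<le> B a" using vB[of 0 a] by linarith

lemma Ca_nonneg: "0 \<le> Ca a"
  unfolding Ca_def using B_nonneg by (simp add: sum_nonneg)

lemma Psi_move_ev:
  assumes "a \<le> n"
  shows "p (Psi (Suc n) (ev a) - Psi n (ev a)) \<le> Ca a * e n"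
proof -
  have c: "ev a \<in> carrier (ZP m n)" by (rule ev_carrier[OF assms])
  define K where "K = 2 * (\<Sum>b\<le>a. B b)"
  have QK: "Qr (ev a) \<le> K" unfolding K_def by (rule Qr_ev)
  have Q0: "0 \<le> Qr (ev a)" by (rule Qr_nonneg[OF c])
  have en: "0 < e n" "e n \<le> 1/4" using e_pos e_le by auto
  have "q n (ev a) = Qr (ev a) - e n * Qr (ev a) + e n * ind (ev a)" by (simp add: qv_alt algebra_simps)
  moreover have "0 \<le> e n * Qr (ev a)" by (rule mult_nonneg_nonneg) (use en Q0 in auto)
  moreover have "e n * ind (ev a) \<le> 1" by (rule mult_le_one) (use en ind_le1[of "ev a"] ind_nonneg[of "ev a"] in auto)
  ultimately have qb: "q n (ev a) \<le> K + 1" using QK by linarith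
  have "p (Psi (Suc n) (ev a) - Psi n (ev a)) \<le> 2 * e n * (q n (ev a) + 1 + Qr (ev a)) + e (Suc n)"
    by (rule Psi_move[OF c])
  also have "\<dots> \<le> 2 * e n * (2 * K + 2) + e n"
  proof -
    have "q n (ev a) + 1 + Qr (ev a) \<le> 2 * K + 2" using qb QK by linarith
    then have "2 * e n * (q n (ev a) + 1 + Qr (ev a)) \<le> 2 * e n * (2 * K + 2)"
      using en by (intro mult_left_mono) auto
    moreover have "e (Suc n) \<le> e n" using e_Suc[of n] en by simp
    ultimately show ?thesis by linarith
  qed
  also have "\<dots> = Ca a * e n" unfolding Ca_def K_def by (simp add: algebra_simps)
  finally show ?thesis .
qed

lemma D_nonneg: "0 \<le> D a b"
  using vDw[of a b] by (metis abs_ge_zero)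

lemma Psi_dist:
  assumes "a \<le> n" "b \<le> n"
  shows "\<bar>p (Psi n (ev a) - Psi n (ev b)) - D a b\<bar> \<le> 2 * e n * (D a b + 1)"
proof -
  interpret Z: group "ZP m n" by (rule ZPg)
  have P: "Pn n (Psi n)" by (rule Psi_P)
  have hom: "\<forall>x\<in>carrier (ZP m n). \<forall>y\<in>carrier (ZP m n). Psi n (x \<otimes>\<^bsub>ZP m n\<^esub> y) = Psi n x + Psi n y"
    using P unfolding Pn_def by blast
  have ca: "ev a \<in> carrier (ZP m n)" and cb: "ev b \<in> carrier (ZP m n)" using ev_carrier assms by auto
  let ?w = "ev a \<otimes>\<^bsub>ZP m n\<^esub> inv\<^bsub>ZP m n\<^esub> ev b"
  have w: "?w \<in> carrier (ZP m n)" by (rule Z.m_closed[OF ca Z.inv_closed[OF cb]])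
  have "Psi n ?w = Psi n (ev a) + Psi n (inv\<^bsub>ZP m n\<^esub> ev b)" using hom ca Z.inv_closed[OF cb] by blast
  also have "\<dots> = Psi n (ev a) - Psi n (ev b)" using hom_props(2)[OF Z.is_group hom cb] by simp
  finally have pw: "Psi n ?w = Psi n (ev a) - Psi n (ev b)" .
  have bnd: "(1 - e n) * q n ?w \<le> p (Psi n ?w)" "p (Psi n ?w) \<le> (1 + e n) * q n ?w"
    using P w unfolding Pn_def by blast+
  have qw: "q n ?w = (1 - e n) * D a b + e n * (if a = b then 0 else 1)" by (rule qv_diff[OF assms])
  define E where "E = e n"
  define d where "d = D a b"
  define i where "i = (if a = b then 0 else (1::real))"
  have E: "0 < E" "E \<le> 1/4" unfolding E_def using e_pos e_le by auto
  have d: "0 \<le> d" unfolding d_def by (rule D_nonneg)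
  have i: "0 \<le> i" "i \<le> 1" unfolding i_def by auto
  have b1: "(1 - E) * ((1 - E) * d + E * i) \<le> p (Psi n ?w)" using bnd qw unfolding E_def d_def i_def by simp
  have b2: "p (Psi n ?w) \<le> (1 + E) * ((1 - E) * d + E * i)" using bnd qw unfolding E_def d_def i_def by simp
  have l1: "d - 2 * E * (d + 1) \<le> (1 - E) * ((1 - E) * d + E * i)"
  proof -
    have "(1 - E) * ((1 - E) * d + E * i) = d - 2 * E * d + E * E * d + (1 - E) * E * i"
      by (simp add: algebra_simps)
    moreover have "0 \<le> E * E * d" using E d by simp
    moreover have "0 \<le> (1 - E) * E * i" using E i by simp
    moreover have "0 \<le> 2 * E" using E by simp
    ultimately show ?thesis by (simp add: algebra_simps)
  qed
  have l2: "(1 + E) * ((1 - E) * d + E * i) \<le> d + 2 * E * (d + 1)"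
  proof -
    have "(1 + E) * ((1 - E) * d + E * i) = d - E * E * d + E * i + E * E * i"
      by (simp add: algebra_simps)
    moreover have "0 \<le> E * E * d" using E d by simp
    moreover have "E * i \<le> E" using E i by (simp add: mult_left_le)
    moreover have "E * E * i \<le> E" proof -
      have "E * i \<le> 1" by (rule mult_le_one) (use E i in auto)
      then have "E * (E * i) \<le> E * 1" using E by (intro mult_left_mono) auto
      then show ?thesis by (simp add: mult.assoc)
    qed
    moreover have "0 \<le> E * d" using E d by simp
    moreover have "2 * E * (d + 1) = 2 * (E * d) + 2 * E" by (simp add: algebra_simps)
    ultimately show ?thesis by linarith
  qed
  show ?thesis using b1 b2 l1 l2 pw unfolding E_def d_def by (simp add: abs_le_iff)
qed

end



context Main begin

lemma e_le_pow: "e n \<le> (1/2)^n"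
  unfolding e_def by (rule power_decreasing) auto

lemma embed_seq:
  assumes comp: "\<And>s::nat \<Rightarrow> 'g. (\<forall>\<epsilon>>0. \<exists>K. \<forall>k\<ge>K. \<forall>l\<ge>K. p (s k - s l) < \<epsilon>) \<Longrightarrow>
                      \<exists>L. \<forall>\<epsilon>>0. \<exists>K. \<forall>k\<ge>K. p (s k - L) < \<epsilon>"
  shows "\<exists>f. \<forall>a b. p (f a - f b) = D a b"
proof -
  define s where "s a k = Psi (a + k) (ev a)" for a k
  have cs: "\<forall>\<epsilon>>0. \<exists>K. \<forall>k\<ge>K. \<forall>l\<ge>K. p (s a k - s a l) < \<epsilon>" for a
  proof (rule geo_cauchy[OF pval Ca_nonneg])
    fix k
    have "p (s a (Suc k) - s a k) \<le> Ca a * e (a + k)"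
      unfolding s_def using Psi_move_ev[of a "a + k"] by simp
    also have "\<dots> \<le> Ca a * (1/2)^k"
    proof (rule mult_left_mono[OF _ Ca_nonneg])
      have "e (a + k) \<le> (1/2)^(a + k)" by (rule e_le_pow)
      also have "\<dots> \<le> (1/2)^k" by (rule power_decreasing) auto
      finally show "e (a + k) \<le> (1/2)^k" .
    qed
    finally show "p (s a (Suc k) - s a k) \<le> Ca a * (1/2)^k" .
  qed
  have "\<forall>a. \<exists>L. \<forall>\<epsilon>>0. \<exists>K. \<forall>k\<ge>K. p (s a k - L) < \<epsilon>"
  proof
    fix a show "\<exists>L. \<forall>\<epsilon>>0. \<exists>K. \<forall>k\<ge>K. p (s a k - L) < \<epsilon>" by (rule comp[where s="s a", OF cs])
  qed
  then obtain f where f: "\<And>a. \<forall>\<epsilon>>0. \<exists>K. \<forall>k\<ge>K. p (s a k - f a) < \<epsilon>" by metis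
  have "p (f a - f b) = D a b" for a b
  proof (rule iso_limit[OF pval])
    fix \<epsilon> :: real assume \<epsilon>: "\<epsilon> > 0"
    obtain Ka where Ka: "\<forall>k\<ge>Ka. p (s a k - f a) < \<epsilon>" using f \<epsilon> by blast
    obtain Kb where Kb: "\<forall>k\<ge>Kb. p (s b k - f b) < \<epsilon>" using f \<epsilon> by blast
    have "\<epsilon> / (2 * (D a b + 1)) > 0" using \<epsilon> D_nonneg[of a b] by simp
    then obtain N0 where N0: "(1/2::real)^N0 < \<epsilon> / (2 * (D a b + 1))"
      using real_arch_pow_inv[of "\<epsilon> / (2 * (D a b + 1))" "1/2"] by auto
    define n where "n = max (a + Ka) (max (b + Kb) N0)"
    have na: "a \<le> n" "Ka \<le> n - a" and nb: "b \<le> n" "Kb \<le> n - b" and nN: "N0 \<le> n"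
      unfolding n_def by auto
    have u: "p (f a - Psi n (ev a)) < \<epsilon>"
    proof -
      have "s a (n - a) = Psi n (ev a)" unfolding s_def using na by simp
      then show ?thesis using Ka na p_sym[OF pval, of "f a" "Psi n (ev a)"] by force
    qed
    have w: "p (f b - Psi n (ev b)) < \<epsilon>"
    proof -
      have "s b (n - b) = Psi n (ev b)" unfolding s_def using nb by simp
      then show ?thesis using Kb nb p_sym[OF pval, of "f b" "Psi n (ev b)"] by force
    qed
    have "\<bar>p (Psi n (ev a) - Psi n (ev b)) - D a b\<bar> \<le> 2 * e n * (D a b + 1)"
      by (rule Psi_dist[OF na(1) nb(1)])
    also have "\<dots> < \<epsilon>"
    proof -
      have pd: "(1/2::real)^n \<le> (1/2)^N0" by (rule power_decreasing[OF nN]) auto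
      have "e n \<le> (1/2)^N0" using e_le_pow[of n] pd by linarith
      then have "e n < \<epsilon> / (2 * (D a b + 1))" using N0 by simp
      then have "e n * (2 * (D a b + 1)) < \<epsilon>" using D_nonneg[of a b] by (simp add: pos_less_divide_eq)
      then show ?thesis by (simp add: algebra_simps)
    qed
    finally show "\<exists>u w. p (f a - u) < \<epsilon> \<and> p (f b - w) < \<epsilon> \<and> \<bar>p (u - w) - D a b\<bar> < \<epsilon>"
      using u w by blast
  qed
  then show ?thesis by blast
qed

end



lemma value_metric:
  assumes pv: "is_value p"
  shows "Metric_space UNIV (value_dist p)"
proof
  fix x y z :: 'a
  show "0 \<le> value_dist p x y" unfolding value_dist_def using is_value_props(1)[OF pv] by simp
  show "value_dist p x y = value_dist p y x" unfolding value_dist_def by (rule p_sym[OF pv])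
  show "(value_dist p x y = 0) = (x = y)" unfolding value_dist_def using is_value_props(2)[OF pv] by simp
  show "value_dist p x z \<le> value_dist p x y + value_dist p y z" unfolding value_dist_def by (rule p_tri[OF pv])
qed

lemma comp_from_mcomplete:
  fixes p :: "'g::ab_group_add \<Rightarrow> real" and s :: "nat \<Rightarrow> 'g"
  assumes pv: "is_value p" and mc: "Metric_space.mcomplete UNIV (value_dist p)"
    and cs: "\<forall>\<epsilon>>0. \<exists>K. \<forall>k\<ge>K. \<forall>l\<ge>K. p (s k - s l) < \<epsilon>"
  shows "\<exists>L. \<forall>\<epsilon>>0. \<exists>K. \<forall>k\<ge>K. p (s k - L) < \<epsilon>"
proof -
  interpret Mt: Metric_space UNIV "value_dist p" by (rule value_metric[OF pv])
  have "Mt.MCauchy s" unfolding Mt.MCauchy_def value_dist_def using cs by blast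
  then obtain L where "limitin Mt.mtopology s L sequentially" using mc unfolding Mt.mcomplete_def by blast
  then have "\<forall>\<epsilon>>0. \<exists>N. \<forall>n\<ge>N. value_dist p (s n) L < \<epsilon>" unfolding Mt.limit_metric_sequentially by blast
  then show ?thesis unfolding value_dist_def by blast
qed

lemma (in Metric_space) dist_diff_le:
  assumes "a \<in> M" "b \<in> M" "x \<in> M" "y \<in> M"
  shows "\<bar>d a b - d x y\<bar> \<le> d a x + d b y"
proof -
  have "d a b \<le> d a x + d x b" using triangle assms by blast
  moreover have "d x b \<le> d x y + d y b" using triangle assms by blast
  moreover have "d x y \<le> d x a + d a y" using triangle assms by blast
  moreover have "d a y \<le> d a b + d b y" using triangle assms by blast
  moreover have "d y b = d b y" "d x a = d a x" using commute by auto
  ultimately show ?thesis by linarith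
qed

theorem theorem5p12:
  fixes r :: ereal and N :: nat
    and p :: "'g::ab_group_add \<Rightarrow> real"
    and M :: "'a set" and d :: "'a \<Rightarrow> 'a \<Rightarrow> real"
  assumes "r = 1 \<or> r = \<infinity>"
    and "N \<noteq> 1"
    and "is_bbG r N p"
    and "Metric_space M d"
    and "separable_space (Metric_space.mtopology M d)"
    and "\<forall>x\<in>M. \<forall>y\<in>M. ereal (d x y) \<le> r"
  shows "\<exists>f :: 'a \<Rightarrow> 'g. \<forall>x\<in>M. \<forall>y\<in>M. value_dist p (f x) (f y) = d x y"
proof -
  note rr = assms(1) and N1 = assms(2) and bb = assms(3) and dr = assms(6)
  interpret Met: Metric_space M d by (rule assms(4))
  have pv: "is_value p" and pr: "\<And>x. ereal (p x) \<le> r"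
    and mc: "Metric_space.mcomplete UNIV (value_dist p)" and G2: "G2_property r N p"
    using bb unfolding is_bbG_def in_frakG_def by blast+
  have comp: "\<And>s::nat \<Rightarrow> 'g. (\<forall>\<epsilon>>0. \<exists>K. \<forall>k\<ge>K. \<forall>l\<ge>K. p (s k - s l) < \<epsilon>) \<Longrightarrow>
                      \<exists>L. \<forall>\<epsilon>>0. \<exists>K. \<forall>k\<ge>K. p (s k - L) < \<epsilon>"
    by (rule comp_from_mcomplete[OF pv mc])
  show ?thesis
  proof (cases "M = {}")
    case True then show ?thesis by simp
  next
    case Mne: False
    obtain C where C: "countable C" "C \<subseteq> M" "Met.mtopology closure_of C = M"
      using assms(5) unfolding separable_space_def by auto
    have Cne: "C \<noteq> {}" using C(3) Mne by auto
    define xs where "xs = from_nat_into C"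
    have xsC: "\<And>a. xs a \<in> C" unfolding xs_def using from_nat_into[OF Cne] by blast
    have xsM: "\<And>a. xs a \<in> M" using xsC C(2) by blast
    have rng: "range xs = C" unfolding xs_def by (rule range_from_nat_into[OF Cne C(1)])
    have dense: "\<And>x \<epsilon>. x \<in> M \<Longrightarrow> \<epsilon> > 0 \<Longrightarrow> \<exists>a. d x (xs a) < \<epsilon>"
    proof -
      fix x \<epsilon> assume x: "x \<in> M" and \<epsilon>: "(\<epsilon>::real) > 0"
      have "x \<in> Met.mtopology closure_of C" using C(3) x by simp
      then obtain y where "y \<in> C" "y \<in> Met.mball x \<epsilon>"
        unfolding Met.metric_closure_of using \<epsilon> by blast
      then show "\<exists>a. d x (xs a) < \<epsilon>" using rng by auto
    qed
    define m where "m = (if N = 0 then 2 else N)"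
    define v where "v i a = d (xs a) (xs i) - d (xs 0) (xs i)" for i a
    define B where "B a = d (xs a) (xs 0)" for a
    define D where "D a b = d (xs a) (xs b)" for a b
    interpret Mn: Main m v B D r N p
    proof (unfold_locales)
      show "2 \<le> m" unfolding m_def using N1 by auto
      show "\<bar>v i a\<bar> \<le> B a" for i a
        unfolding v_def B_def using Met.mdist_reverse_triangle[OF xsM xsM xsM, of a i 0] Met.commute
        by (smt (verit))
      show "\<bar>v i a - v i b\<bar> \<le> D a b" for i a b
        unfolding v_def D_def using Met.mdist_reverse_triangle[OF xsM xsM xsM, of a i b] Met.commute
        by (smt (verit))
      show "\<exists>i. \<bar>v i a - v i b\<bar> = D a b" for a b
        by (rule exI[of _ a]) (simp add: v_def D_def xsM Met.commute)
      show "r = 1 \<Longrightarrow> D a b \<le> 1" for a b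
        unfolding D_def using dr xsM by (auto simp: one_ereal_def)
      show "D a a = 0" for a unfolding D_def using xsM by simp
      show "G2_property r N p" by (rule G2)
      show "r = 1 \<or> r = \<infinity>" by (rule rr)
      show "N \<noteq> 0 \<Longrightarrow> m = N" unfolding m_def by simp
      show "is_value p" by (rule pv)
      show "ereal (p x) \<le> r" for x by (rule pr)
    qed
    obtain f0 where f0: "\<And>a b. p (f0 a - f0 b) = d (xs a) (xs b)"
      using Mn.embed_seq[OF comp] unfolding D_def by blast
    define \<sigma> where "\<sigma> x k = (SOME a. d x (xs a) < 1 / real (Suc k))" for x k
    have \<sigma>: "\<And>x k. x \<in> M \<Longrightarrow> d x (xs (\<sigma> x k)) < 1 / real (Suc k)"
      unfolding \<sigma>_def by (rule someI_ex) (rule dense, auto)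
    have archi: "\<And>\<epsilon>. \<epsilon> > 0 \<Longrightarrow> \<exists>K. 2 / real (Suc K) < \<epsilon>"
    proof -
      fix \<epsilon> :: real assume \<epsilon>: "\<epsilon> > 0"
      obtain K where K: "2 / \<epsilon> < real K" using reals_Archimedean2 by blast
      have "2 < real K * \<epsilon>" using K \<epsilon> by (simp add: divide_less_eq)
      then have "2 < real (Suc K) * \<epsilon>" using \<epsilon> by (simp add: distrib_right)
      then show "\<exists>K. 2 / real (Suc K) < \<epsilon>" by (intro exI[of _ K]) (simp add: divide_less_eq mult.commute)
    qed
    have small: "\<And>k K. K \<le> k \<Longrightarrow> 1 / real (Suc k) \<le> 1 / real (Suc K)"
      by (simp add: frac_le)
    have cauchy: "\<forall>\<epsilon>>0. \<exists>K. \<forall>k\<ge>K. \<forall>l\<ge>K. p (f0 (\<sigma> x k) - f0 (\<sigma> x l)) < \<epsilon>" if x: "x \<in> M" for x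
    proof (intro allI impI)
      fix \<epsilon> :: real assume \<epsilon>: "\<epsilon> > 0"
      obtain K where K: "2 / real (Suc K) < \<epsilon>" using archi[OF \<epsilon>] by blast
      show "\<exists>K. \<forall>k\<ge>K. \<forall>l\<ge>K. p (f0 (\<sigma> x k) - f0 (\<sigma> x l)) < \<epsilon>"
      proof (intro exI allI impI)
        fix k l assume k: "K \<le> k" and l: "K \<le> l"
        have "p (f0 (\<sigma> x k) - f0 (\<sigma> x l)) = d (xs (\<sigma> x k)) (xs (\<sigma> x l))" by (rule f0)
        also have "\<dots> \<le> d (xs (\<sigma> x k)) x + d x (xs (\<sigma> x l))" using Met.triangle xsM x by blast
        also have "\<dots> < 1 / real (Suc k) + 1 / real (Suc l)"
          using \<sigma>[OF x, of k] \<sigma>[OF x, of l] Met.commute by (simp add: add_strict_mono)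
        also have "\<dots> \<le> 2 / real (Suc K)" using small[OF k] small[OF l] by simp
        finally show "p (f0 (\<sigma> x k) - f0 (\<sigma> x l)) < \<epsilon>" using K by linarith
      qed
    qed
    define F where "F x = (SOME L. \<forall>\<epsilon>>0. \<exists>K. \<forall>k\<ge>K. p (f0 (\<sigma> x k) - L) < \<epsilon>)" for x
    have F: "\<And>x. x \<in> M \<Longrightarrow> \<forall>\<epsilon>>0. \<exists>K. \<forall>k\<ge>K. p (f0 (\<sigma> x k) - F x) < \<epsilon>"
      unfolding F_def by (rule someI_ex, rule comp, rule cauchy)
    have "value_dist p (F x) (F y) = d x y" if x: "x \<in> M" and y: "y \<in> M" for x y
      unfolding value_dist_def
    proof (rule iso_limit[OF pv])
      fix \<epsilon> :: real assume \<epsilon>: "\<epsilon> > 0"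
      obtain K1 where K1: "\<forall>k\<ge>K1. p (f0 (\<sigma> x k) - F x) < \<epsilon>" using F[OF x] \<epsilon> by blast
      obtain K2 where K2: "\<forall>k\<ge>K2. p (f0 (\<sigma> y k) - F y) < \<epsilon>" using F[OF y] \<epsilon> by blast
      obtain K3 where K3: "2 / real (Suc K3) < \<epsilon>" using archi[OF \<epsilon>] by blast
      define k where "k = max K1 (max K2 K3)"
      have k: "K1 \<le> k" "K2 \<le> k" "K3 \<le> k" unfolding k_def by auto
      have u: "p (F x - f0 (\<sigma> x k)) < \<epsilon>" using K1 k(1) p_sym[OF pv, of "F x" "f0 (\<sigma> x k)"] by simp
      have w: "p (F y - f0 (\<sigma> y k)) < \<epsilon>" using K2 k(2) p_sym[OF pv, of "F y" "f0 (\<sigma> y k)"] by simp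
      have "\<bar>p (f0 (\<sigma> x k) - f0 (\<sigma> y k)) - d x y\<bar> = \<bar>d (xs (\<sigma> x k)) (xs (\<sigma> y k)) - d x y\<bar>" using f0 by simp
      also have "\<dots> \<le> d (xs (\<sigma> x k)) x + d (xs (\<sigma> y k)) y" by (rule Met.dist_diff_le[OF xsM xsM x y])
      also have "\<dots> < 1 / real (Suc k) + 1 / real (Suc k)"
        using \<sigma>[OF x, of k] \<sigma>[OF y, of k] Met.commute by (simp add: add_strict_mono)
      also have "\<dots> \<le> 2 / real (Suc K3)" using small[OF k(3)] by simp
      finally have "\<bar>p (f0 (\<sigma> x k) - f0 (\<sigma> y k)) - d x y\<bar> < \<epsilon>" using K3 by linarith
      then show "\<exists>u w. p (F x - u) < \<epsilon> \<and> p (F y - w) < \<epsilon> \<and> \<bar>p (u - w) - d x y\<bar> < \<epsilon>"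
        using u w by blast
    qed
    then show ?thesis by blast
  qed
qed


end
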